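(* Suppose $\lceil N/M\rceil\ge e$ and the target gain $g$ satisfies $7\le g\le \frac{(N/M)^2}{3\log(N/M)}$, and let $K$ be a large multiple of $K'=\lceil N/M\rceil\,3g\log(N/M)$. Partition the $K$ users into groups of $K'$ users each; use the new placement scheme for all users, and apply the modified (pull-down) delivery scheme with parameter $g$ separately within each group (transmissions for a group use only the demands and caches of that group's users), with $F=O\big(\binom{K'}{g}(\log\binom{K'}{g})^2\lceil N/M\rceil\big)\approx O\big((N/M)^{g+1}(3e)^g(\log(N/M))^{g+2}g^2\big)$ packets per file. Then for every demand pattern, the expected total normalized number of transmissions required for all users is at most $\frac43\frac{K}{g+1}(1+o(1))$, the expectation being over the randomness of placement and delivery.
   Context: Setting: a server holds a library of $N$ files ($N>K'$), each split into $F$ packets (packet $f$ of file $n$ denoted $(n,f)$); $K$ users each have a cache of size $M$ files ($M\le N$). For a cache configuration, $S_{n,f}$ is the set of users whose cache stores packet $(n,f)$. User $k$ requests file $d_k$. New placement scheme: $F=\lceil N/M\rceil F'$ with $F'$ a positive integer; the packets of each file are partitioned into $F'$ groups of $\lceil N/M\rceil$ packets. For every user, file and group, exactly one packet of the group is chosen uniformly at random and stored in the user's cache; all choices are independent. Modified delivery scheme with parameter $g$ applied to a set $U$ of users: (1) Pull-down phase: for every $k\in U$ and packet $f$ with $|S_{d_k,f}\cap U|\ge g+1$, replace (virtually) the storing set by a uniformly random $g$-element subset of it, independently. (2) With these sets (restricted to $U$), for $k\in U$ and $T\subseteq U\setminus\{k\}$ let $V_{k,T}$ be the set of packets of file $d_k$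 whose storing set equals $T$; for every nonempty $\mathcal{S}\subseteq U$ transmit the XOR of the zero-padded vectors $V_{k,\mathcal{S}\setminus\{k\}}$, $k\in\mathcal{S}$. The normalized number of transmissions for $U$ is $\sum_{\emptyset\ne\mathcal{S}\subseteq U}\max_{k\in\mathcal{S}}|V_{k,\mathcal{S}\setminus\{k\}}|/F$; the total is the sum over the groups. The $o(1)$ term tends to $0$ as the group size $K'$ grows. *)

theory Defs
  imports "HOL-Probability.Probability"
begin

text \<open>Users are 0..<K, files 0..<N, packets of a file 0..<F with
  F = q * F' and q = ceil(N/M). Packet f lies in packet-group (f div q) and has
  position (f mod q) inside it. A placement is a function c with c(k,n,j) in 0..<q
  the position of the packet of group j of file n that user k caches.\<close>

definition qq :: "real \<Rightarrow> real \<Rightarrow> nat" where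
  "qq N M = nat \<lceil>N / M\<rceil>"

definition Kgrp :: "real \<Rightarrow> real \<Rightarrow> nat \<Rightarrow> nat" where
  "Kgrp N M g = nat \<lceil>real (qq N M) * 3 * real g * ln (N / M)\<rceil>"

definition placement_pmf :: "nat \<Rightarrow> nat \<Rightarrow> nat \<Rightarrow> nat \<Rightarrow> (nat \<times> nat \<times> nat \<Rightarrow> nat) pmf" where
  "placement_pmf K N q F' = Pi_pmf ({..<K} \<times> {..<N} \<times> {..<F'}) 0 (\<lambda>_. pmf_of_set {..<q})"

definition storing :: "(nat \<times> nat \<times> nat \<Rightarrow> nat) \<Rightarrow> nat \<Rightarrow> nat \<Rightarrow> nat \<Rightarrow> nat \<Rightarrow> nat set" where
  "storing c q K n f = {k \<in> {..<K}. c (k, n, f div q) = f mod q}"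

definition grp :: "nat \<Rightarrow> nat \<Rightarrow> nat set" where
  "grp Kp k = {(k div Kp) * Kp ..< (k div Kp) * Kp + Kp}"

definition pulldown_pmf :: "nat \<Rightarrow> nat \<Rightarrow> nat \<Rightarrow> nat \<Rightarrow> nat \<Rightarrow> (nat \<Rightarrow> nat)
    \<Rightarrow> (nat \<times> nat \<times> nat \<Rightarrow> nat) \<Rightarrow> (nat \<times> nat \<Rightarrow> nat set) pmf" where
  "pulldown_pmf K Kp q F' g d c =
     Pi_pmf ({..<K} \<times> {..<q * F'}) {}
       (\<lambda>(k, f). let A = storing c q K (d k) f \<inter> grp Kp k in
          if k \<notin> A \<and> g + 1 \<le> card A then pmf_of_set {T. T \<subseteq> A \<and> card T = g}
          else return_pmf A)"

definition Vset :: "nat \<Rightarrow> nat \<Rightarrow> nat \<Rightarrow> (nat \<Rightarrow> nat) \<Rightarrow> (nat \<times> nat \<times> nat \<Rightarrow> nat)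
    \<Rightarrow> (nat \<times> nat \<Rightarrow> nat set) \<Rightarrow> nat \<Rightarrow> nat set \<Rightarrow> nat set" where
  "Vset K q F' d c P k T = {f \<in> {..<q * F'}. k \<notin> storing c q K (d k) f \<and> P (k, f) = T}"

definition group_cost :: "nat \<Rightarrow> nat \<Rightarrow> nat \<Rightarrow> (nat \<Rightarrow> nat) \<Rightarrow> (nat \<times> nat \<times> nat \<Rightarrow> nat)
    \<Rightarrow> (nat \<times> nat \<Rightarrow> nat set) \<Rightarrow> nat set \<Rightarrow> real" where
  "group_cost K q F' d c P U =
     (\<Sum>Ss \<in> Pow U - {{}}. real (Max ((\<lambda>k. card (Vset K q F' d c P k (Ss - {k}))) ` Ss)))
       / real (q * F')"

definition total_cost :: "nat \<Rightarrow> nat \<Rightarrow> nat \<Rightarrow> nat \<Rightarrow> (nat \<Rightarrow> nat) \<Rightarrow> (nat \<times> nat \<times> nat \<Rightarrow> nat)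
    \<Rightarrow> (nat \<times> nat \<Rightarrow> nat set) \<Rightarrow> real" where
  "total_cost m Kp q F' d c P =
     (\<Sum>i<m. group_cost (m * Kp) q F' d c P {i * Kp ..< i * Kp + Kp})"

definition cost_pmf :: "nat \<Rightarrow> nat \<Rightarrow> nat \<Rightarrow> nat \<Rightarrow> nat \<Rightarrow> nat \<Rightarrow> (nat \<Rightarrow> nat) \<Rightarrow> real pmf" where
  "cost_pmf N m Kp q F' g d =
     bind_pmf (placement_pmf (m * Kp) N q F') (\<lambda>c.
       bind_pmf (pulldown_pmf (m * Kp) Kp q F' g d c) (\<lambda>P.
         return_pmf (total_cost m Kp q F' d c P)))"

definition expected_cost :: "nat \<Rightarrow> nat \<Rightarrow> nat \<Rightarrow> nat \<Rightarrow> nat \<Rightarrow> nat \<Rightarrow> (nat \<Rightarrow> nat) \<Rightarrow> real" where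
  "expected_cost N m Kp q F' g d = measure_pmf.expectation (cost_pmf N m Kp q F' g d) (\<lambda>x. x)"

end

theory Submission
  imports Defs
begin

lemma expectation_bind_finite:
  fixes f :: "'b \<Rightarrow> real"
  assumes fin: "finite (set_pmf M)" and finN: "\<And>x. x \<in> set_pmf M \<Longrightarrow> finite (set_pmf (N x))"
  shows "measure_pmf.expectation (bind_pmf M N) f =
         measure_pmf.expectation M (\<lambda>x. measure_pmf.expectation (N x) f)"
proof -
  define S where "S = (\<Union>x\<in>set_pmf M. set_pmf (N x))"
  have finS: "finite S" using fin finN by (auto simp: S_def)
  have "measure_pmf.expectation (bind_pmf M N) f = (\<Sum>y\<in>S. pmf (bind_pmf M N) y *\<^sub>R f y)"
    by (rule integral_measure_pmf[OF finS]) (auto simp: S_def)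
  also have "\<dots> = (\<Sum>y\<in>S. (\<Sum>x\<in>set_pmf M. pmf M x *\<^sub>R pmf (N x) y) * f y)"
  proof (intro sum.cong refl)
    fix y assume "y \<in> S"
    have "pmf (bind_pmf M N) y = measure_pmf.expectation M (\<lambda>x. pmf (N x) y)"
      by (rule pmf_bind)
    also have "\<dots> = (\<Sum>x\<in>set_pmf M. pmf M x *\<^sub>R pmf (N x) y)"
      by (rule integral_measure_pmf[OF fin]) (auto)
    finally show "pmf (bind_pmf M N) y *\<^sub>R f y = (\<Sum>x\<in>set_pmf M. pmf M x *\<^sub>R pmf (N x) y) * f y"
      by simp
  qed
  also have "\<dots> = (\<Sum>x\<in>set_pmf M. pmf M x * (\<Sum>y\<in>S. pmf (N x) y * f y))"
    by (simp add: sum_distrib_left sum_distrib_right mult.assoc sum.swap[of _ S])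
  also have "\<dots> = (\<Sum>x\<in>set_pmf M. pmf M x *\<^sub>R measure_pmf.expectation (N x) f)"
  proof (intro sum.cong refl)
    fix x assume x: "x \<in> set_pmf M"
    have "measure_pmf.expectation (N x) f = (\<Sum>y\<in>S. pmf (N x) y *\<^sub>R f y)"
      by (rule integral_measure_pmf[OF finS]) (use x in \<open>auto simp: S_def\<close>)
    then show "pmf M x * (\<Sum>y\<in>S. pmf (N x) y * f y) = pmf M x *\<^sub>R measure_pmf.expectation (N x) f"
      by simp
  qed
  also have "\<dots> = measure_pmf.expectation M (\<lambda>x. measure_pmf.expectation (N x) f)"
    by (rule integral_measure_pmf[OF fin, symmetric]) auto
  finally show ?thesis .
qed

lemma expectation_pair_pmf_finite:
  fixes f :: "'a \<Rightarrow> real" and g :: "'b \<Rightarrow> real"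
  assumes "finite (set_pmf A)" "finite (set_pmf B)"
  shows "measure_pmf.expectation (pair_pmf A B) (\<lambda>(x,y). f x * g y) =
         measure_pmf.expectation A f * measure_pmf.expectation B g"
proof -
  have "measure_pmf.expectation (pair_pmf A B) (\<lambda>(x,y). f x * g y) =
     measure_pmf.expectation A (\<lambda>x. measure_pmf.expectation (bind_pmf B (\<lambda>y. return_pmf (x,y))) (\<lambda>(x,y). f x * g y))"
    unfolding pair_pmf_def using assms by (subst expectation_bind_finite) auto
  also have "\<dots> = measure_pmf.expectation A (\<lambda>x. f x * measure_pmf.expectation B g)"
    by (simp add: bind_return_pmf map_pmf_def[symmetric])
  also have "\<dots> = measure_pmf.expectation A f * measure_pmf.expectation B g" by simp
  finally show ?thesis .
qed

lemma finite_set_Pi_pmf: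
  assumes "finite I" "\<And>x. x \<in> I \<Longrightarrow> finite (set_pmf (p x))"
  shows "finite (set_pmf (Pi_pmf I dflt p))"
  using assms by (subst set_Pi_pmf) (auto intro!: finite_PiE_dflt)

lemma expectation_Pi_indep:
  fixes \<phi> \<psi> :: "('a \<Rightarrow> 'b) \<Rightarrow> real"
  assumes fin: "finite I" and JI: "J \<subseteq> I" and finp: "\<And>x. x \<in> I \<Longrightarrow> finite (set_pmf (p x))"
    and dep1: "\<And>h h'. (\<forall>x\<in>J. h x = h' x) \<Longrightarrow> \<phi> h = \<phi> h'"
    and dep2: "\<And>h h'. (\<forall>x\<in>I-J. h x = h' x) \<Longrightarrow> \<psi> h = \<psi> h'"
  shows "measure_pmf.expectation (Pi_pmf I dflt p) (\<lambda>h. \<phi> h * \<psi> h) =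
         measure_pmf.expectation (Pi_pmf I dflt p) \<phi> * measure_pmf.expectation (Pi_pmf I dflt p) \<psi>"
proof -
  define mg :: "('a \<Rightarrow> 'b) \<times> ('a \<Rightarrow> 'b) \<Rightarrow> 'a \<Rightarrow> 'b" where
    "mg = (\<lambda>(f,g) x. if x \<in> J then f x else g x)"
  define Q where "Q = pair_pmf (Pi_pmf J dflt p) (Pi_pmf (I - J) dflt p)"
  have finJ: "finite J" using fin JI finite_subset by blast
  have f1: "finite (set_pmf (Pi_pmf J dflt p))"
    using finJ JI finp by (intro finite_set_Pi_pmf) auto
  have f2: "finite (set_pmf (Pi_pmf (I-J) dflt p))"
    using fin finp by (intro finite_set_Pi_pmf) auto
  have eq: "Pi_pmf I dflt p = map_pmf mg Q"
  proof -
    have "I = J \<union> (I - J)" using JI by blast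
    then have "Pi_pmf I dflt p = Pi_pmf (J \<union> (I - J)) dflt p" by simp
    also have "\<dots> = map_pmf mg Q" unfolding mg_def Q_def
      by (rule Pi_pmf_union) (use finJ fin in auto)
    finally show ?thesis .
  qed
  have m1: "\<phi> (mg ab) = \<phi> (fst ab)" for ab
    by (rule dep1) (auto simp: mg_def split: prod.splits)
  have m2: "\<psi> (mg ab) = \<psi> (snd ab)" for ab
    by (rule dep2) (auto simp: mg_def split: prod.splits)
  have gen: "measure_pmf.expectation Q (\<lambda>(a,b). u a * v b) =
     measure_pmf.expectation (Pi_pmf J dflt p) u * measure_pmf.expectation (Pi_pmf (I-J) dflt p) v"
    for u v :: "('a \<Rightarrow> 'b) \<Rightarrow> real"
    unfolding Q_def by (rule expectation_pair_pmf_finite[OF f1 f2])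
  have "measure_pmf.expectation (Pi_pmf I dflt p) (\<lambda>h. \<phi> h * \<psi> h)
      = measure_pmf.expectation Q (\<lambda>(a,b). \<phi> a * \<psi> b)"
    by (simp add: eq m1 m2 case_prod_unfold)
  also have "\<dots> = measure_pmf.expectation (Pi_pmf J dflt p) \<phi> * measure_pmf.expectation (Pi_pmf (I-J) dflt p) \<psi>"
    by (rule gen)
  also have "measure_pmf.expectation (Pi_pmf J dflt p) \<phi> = measure_pmf.expectation (Pi_pmf I dflt p) \<phi>"
  proof -
    have "measure_pmf.expectation (Pi_pmf I dflt p) \<phi> = measure_pmf.expectation Q (\<lambda>(a,b). \<phi> a * (\<lambda>_. 1) b)"
      by (simp add: eq m1 case_prod_unfold)
    also have "\<dots> = measure_pmf.expectation (Pi_pmf J dflt p) \<phi>" by (subst gen) simp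
    finally show ?thesis by simp
  qed
  also have "measure_pmf.expectation (Pi_pmf (I-J) dflt p) \<psi> = measure_pmf.expectation (Pi_pmf I dflt p) \<psi>"
  proof -
    have "measure_pmf.expectation (Pi_pmf I dflt p) \<psi> = measure_pmf.expectation Q (\<lambda>(a,b). (\<lambda>_. 1) a * \<psi> b)"
      by (simp add: eq m2 case_prod_unfold)
    also have "\<dots> = measure_pmf.expectation (Pi_pmf (I-J) dflt p) \<psi>" by (subst gen) simp
    finally show ?thesis by simp
  qed
  finally show ?thesis .
qed

lemma sum_Pow_card:
  fixes \<phi> :: "nat \<Rightarrow> real"
  assumes "finite S"
  shows "(\<Sum>C\<in>Pow S. \<phi> (card C)) = (\<Sum>i\<le>card S. real (card S choose i) * \<phi> i)"
proof -
  have "(\<Sum>C\<in>Pow S. \<phi> (card C)) = (\<Sum>i\<in>{..card S}. \<Sum>C\<in>{C\<in>Pow S. card C = i}. \<phi> (card C))"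
    by (rule sum.group[symmetric]) (use assms in \<open>auto intro: card_mono\<close>)
  also have "\<dots> = (\<Sum>i\<le>card S. real (card S choose i) * \<phi> i)"
  proof (intro sum.cong refl)
    fix i
    have "{C\<in>Pow S. card C = i} = {C. C \<subseteq> S \<and> card C = i}" by auto
    then have "card {C\<in>Pow S. card C = i} = card S choose i" using n_subsets[OF assms] by simp
    then show "(\<Sum>C\<in>{C\<in>Pow S. card C = i}. \<phi> (card C)) = real (card S choose i) * \<phi> i"
      by simp
  qed
  finally show ?thesis .
qed

lemma binomial_sum_one:
  fixes p :: real
  shows "(\<Sum>i\<le>n. real (n choose i) * p ^ i * (1 - p) ^ (n - i)) = 1"
  using binomial_ring[of p "1 - p" n] by simp

lemma chernoff_lower:
  fixes p :: real
  assumes "0 \<le> p" "p \<le> 1"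
  shows "(\<Sum>i\<le>n. if i < g then real (n choose i) * p ^ i * (1 - p) ^ (n - i) else 0)
         \<le> 2 ^ g * (1 - p / 2) ^ n"
proof -
  have "(\<Sum>i\<le>n. if i < g then real (n choose i) * p ^ i * (1 - p) ^ (n - i) else 0)
      \<le> (\<Sum>i\<le>n. 2 ^ g * (real (n choose i) * (p/2) ^ i * (1 - p) ^ (n - i)))"
  proof (intro sum_mono)
    fix i assume "i \<in> {..n}"
    have nn: "0 \<le> real (n choose i) * (p/2) ^ i * (1 - p) ^ (n - i)" using assms by simp
    show "(if i < g then real (n choose i) * p ^ i * (1 - p) ^ (n - i) else 0)
        \<le> 2 ^ g * (real (n choose i) * (p/2) ^ i * (1 - p) ^ (n - i))"
    proof (cases "i < g")
      case True
      have "p ^ i = 2 ^ i * (p/2) ^ i" by (simp add: power_divide)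
      also have "\<dots> \<le> 2 ^ g * (p/2) ^ i" using True assms
        by (intro mult_right_mono power_increasing) auto
      finally have "p ^ i \<le> 2 ^ g * (p / 2) ^ i" .
      then have "real (n choose i) * p ^ i * (1 - p) ^ (n - i) \<le> real (n choose i) * (2 ^ g * (p / 2) ^ i) * (1 - p) ^ (n - i)"
        using assms by (intro mult_right_mono mult_left_mono) auto
      then show ?thesis using True by (simp add: algebra_simps)
    next
      case False then show ?thesis using nn by simp
    qed
  qed
  also have "\<dots> = 2 ^ g * (p/2 + (1 - p)) ^ n"
    by (subst binomial_ring) (simp add: sum_distrib_left mult.assoc)
  also have "p/2 + (1 - p) = 1 - p/2" by simp
  finally show ?thesis .
qed

lemma prob_Pi_pmf_cyl:
  assumes fin: "finite I" and ZI: "Z \<subseteq> I"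
  shows "measure_pmf.prob (Pi_pmf I dflt p) {h. \<forall>x\<in>Z. h x \<in> S x} =
         (\<Prod>x\<in>Z. measure_pmf.prob (p x) (S x))"
proof -
  have "{h. \<forall>x\<in>Z. h x \<in> S x} = Pi I (\<lambda>x. if x \<in> Z then S x else UNIV)"
    using ZI by (auto simp: Pi_def)
  then have "measure_pmf.prob (Pi_pmf I dflt p) {h. \<forall>x\<in>Z. h x \<in> S x} =
       (\<Prod>x\<in>I. measure_pmf.prob (p x) (if x \<in> Z then S x else UNIV))"
    using measure_Pi_pmf_Pi[OF fin] by simp
  also have "\<dots> = (\<Prod>x\<in>I. if x \<in> Z then measure_pmf.prob (p x) (S x) else 1)"
    by (intro prod.cong) auto
  also have "\<dots> = (\<Prod>x\<in>Z. measure_pmf.prob (p x) (S x))"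
    using ZI fin by (simp add: prod.If_cases Int_absorb1)
  finally show ?thesis .
qed

locale gctx =
  fixes N m Kp i q F' g :: nat and d :: "nat \<Rightarrow> nat"
  assumes Kp_pos: "0 < Kp" and i_lt: "i < m" and q_ge: "2 \<le> q" and g_ge: "1 \<le> g"
    and gKp: "g + 1 \<le> Kp" and F'_pos: "0 < F'" and d_lt: "\<forall>k < m*Kp. d k < N"
begin

definition "K = m * Kp"
definition "U = {i*Kp ..< i*Kp + Kp}"
definition "I = {..<K} \<times> {..<N} \<times> {..<F'}"
definition "F = q * F'"
definition "plac = placement_pmf K N q F'"
definition "pd c = pulldown_pmf K Kp q F' g d c"
definition "A c k f = {u \<in> U. c (u, d k, f div q) = f mod q}"
definition "D c k f = (if k \<notin> A c k f \<and> g + 1 \<le> card (A c k f)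
     then pmf_of_set {T. T \<subseteq> A c k f \<and> card T = g} else return_pmf (A c k f))"
definition "Jt = bind_pmf plac (\<lambda>c. map_pmf (\<lambda>P. (c, P)) (pd c))"

lemma U_sub: "U \<subseteq> {..<K}"
proof
  fix u assume "u \<in> U"
  then have "u < i * Kp + Kp" by (simp add: U_def)
  also have "\<dots> = Suc i * Kp" by simp
  also have "\<dots> \<le> m * Kp" using i_lt by (intro mult_right_mono) auto
  finally show "u \<in> {..<K}" by (simp add: K_def)
qed

lemma card_U: "card U = Kp" by (simp add: U_def)
lemma finite_U: "finite U" by (simp add: U_def)

lemma grp_U: "k \<in> U \<Longrightarrow> grp Kp k = U"
proof -
  assume "k \<in> U"
  then have "i * Kp \<le> k" "k < i * Kp + Kp" by (auto simp: U_def)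
  then have "k div Kp = i" using Kp_pos
    by (metis add.commute div_nat_eqI mult.commute mult_Suc_right)
  then show ?thesis by (simp add: grp_def U_def)
qed

lemma dk_lt: "k \<in> U \<Longrightarrow> d k < N"
  using U_sub d_lt by (auto simp: K_def)

lemma F_pos: "0 < F" using q_ge F'_pos by (simp add: F_def)

lemma div_lt: "f < F \<Longrightarrow> f div q < F'"
  using q_ge by (simp add: F_def less_mult_imp_div_less mult.commute)

lemma mod_lt: "f mod q < q" using q_ge by simp

lemma storing_U: "k \<in> U \<Longrightarrow> storing c q K (d k) f \<inter> grp Kp k = A c k f"
  using U_sub by (auto simp: storing_def grp_U A_def)

lemma in_storing_iff: "k \<in> U \<Longrightarrow> k \<in> storing c q K (d k) f \<longleftrightarrow> k \<in> A c k f"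
  using U_sub by (auto simp: storing_def A_def)

lemma finite_A: "finite (A c k f)" using finite_U by (simp add: A_def)
lemma A_sub: "A c k f \<subseteq> U" by (auto simp: A_def)

lemma finite_I: "finite I" by (simp add: I_def)

lemma plac_eq: "plac = Pi_pmf I 0 (\<lambda>_. pmf_of_set {..<q})"
  by (simp add: plac_def placement_pmf_def I_def)

lemma finite_plac: "finite (set_pmf plac)"
proof -
  have "set_pmf (pmf_of_set {..<q}) = {..<q}" using q_ge by (intro set_pmf_of_set) (auto simp: lessThan_empty_iff)
  then show ?thesis unfolding plac_eq by (intro finite_set_Pi_pmf finite_I) auto
qed

definition "Dfull c = (\<lambda>(k, f). let A = storing c q K (d k) f \<inter> grp Kp k in
          if k \<notin> A \<and> g + 1 \<le> card A then pmf_of_set {T. T \<subseteq> A \<and> card T = g}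
          else return_pmf A)"

lemma pd_eq: "pd c = Pi_pmf ({..<K} \<times> {..<F}) {} (Dfull c)"
  by (simp add: pd_def pulldown_pmf_def Dfull_def F_def K_def)

lemma Dfull_U: "k \<in> U \<Longrightarrow> Dfull c (k, f) = D c k f"
  by (simp only: Dfull_def D_def Let_def prod.case storing_U)

lemma finite_Dfull: "finite (set_pmf (Dfull c x))"
proof -
  obtain k f where x: "x = (k, f)" by force
  define B where "B = storing c q K (d k) f \<inter> grp Kp k"
  have fB: "finite B" by (simp add: B_def storing_def)
  have eq: "Dfull c x = (if k \<notin> B \<and> g + 1 \<le> card B then pmf_of_set {T. T \<subseteq> B \<and> card T = g}
          else return_pmf B)" by (simp only: x Dfull_def Let_def prod.case B_def)
  have fin: "finite {T. T \<subseteq> B \<and> card T = g}" using fB by simp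
  show ?thesis
  proof (cases "k \<notin> B \<and> g + 1 \<le> card B")
    case True
    have "g \<le> card B" using True by simp
    then obtain T where "T \<subseteq> B" "card T = g" by (meson obtain_subset_with_card_n)
    then have "{T. T \<subseteq> B \<and> card T = g} \<noteq> {}" by blast
    then show ?thesis using True fin eq by (simp add: set_pmf_of_set)
  next
    case False
    have "Dfull c x = return_pmf B" using eq False by (simp only: if_False)
    then show ?thesis by simp
  qed
qed

lemma finite_pd: "finite (set_pmf (pd c))"
  unfolding pd_eq by (intro finite_set_Pi_pmf finite_Dfull) auto

lemma finite_Jt: "finite (set_pmf Jt)"
proof -
  have "set_pmf Jt = (\<Union>c\<in>set_pmf plac. (\<lambda>P. (c,P)) ` set_pmf (pd c))"
    by (simp add: Jt_def)
  then show ?thesis using finite_plac finite_pd by simp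
qed

lemma integrable_Jt [simp, intro]: "integrable (measure_pmf Jt) (h :: _ \<Rightarrow> real)"
  by (rule integrable_measure_pmf_finite[OF finite_Jt])

lemma integrable_plac [simp, intro]: "integrable (measure_pmf plac) (h :: _ \<Rightarrow> real)"
  by (rule integrable_measure_pmf_finite[OF finite_plac])

lemma integrable_pd [simp, intro]: "integrable (measure_pmf (pd c)) (h :: _ \<Rightarrow> real)"
  by (rule integrable_measure_pmf_finite[OF finite_pd])

lemma E_Jt: "measure_pmf.expectation Jt (h :: _ \<Rightarrow> real) =
   measure_pmf.expectation plac (\<lambda>c. measure_pmf.expectation (pd c) (\<lambda>P. h (c, P)))"
proof -
  have "measure_pmf.expectation Jt h = measure_pmf.expectation plac
      (\<lambda>c. measure_pmf.expectation (map_pmf (\<lambda>P. (c, P)) (pd c)) h)"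
    unfolding Jt_def by (rule expectation_bind_finite) (auto simp: finite_plac finite_pd)
  then show ?thesis by simp
qed

lemma set_D:
  assumes "k \<notin> A c k f"
  shows "set_pmf (D c k f) = (if g + 1 \<le> card (A c k f) then {T. T \<subseteq> A c k f \<and> card T = g} else {A c k f})"
proof (cases "g + 1 \<le> card (A c k f)")
  case True
  have "g \<le> card (A c k f)" using True by simp
  then obtain T where "T \<subseteq> A c k f" "card T = g" by (meson obtain_subset_with_card_n)
  then have ne: "{T. T \<subseteq> A c k f \<and> card T = g} \<noteq> {}" by blast
  have "finite {T. T \<subseteq> A c k f \<and> card T = g}" using finite_A by simp
  then show ?thesis using True assms ne by (simp add: D_def set_pmf_of_set)
next
  case False then show ?thesis by (simp add: D_def)
qed

lemma set_pd_coord: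
  assumes "P \<in> set_pmf (pd c)" "k \<in> U" "f < F"
  shows "P (k, f) \<in> set_pmf (D c k f)"
proof -
  have "P \<in> PiE_dflt ({..<K} \<times> {..<F}) {} (set_pmf \<circ> Dfull c)"
    using assms(1) unfolding pd_eq by (subst (asm) set_Pi_pmf) auto
  moreover have "(k, f) \<in> {..<K} \<times> {..<F}" using assms U_sub by auto
  ultimately have "P (k, f) \<in> set_pmf (Dfull c (k, f))" by (auto simp: PiE_dflt_def)
  then show ?thesis by (simp add: Dfull_U[OF assms(2)])
qed

lemma supp_facts:
  assumes "P \<in> set_pmf (pd c)" "k \<in> U" "f < F" "k \<notin> A c k f"
  shows "P (k, f) \<subseteq> A c k f" "card (P (k, f)) \<le> g"
    "card (P (k, f)) \<noteq> g \<Longrightarrow> P (k, f) = A c k f \<and> card (A c k f) < g"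
  using set_pd_coord[OF assms(1-3)] set_D[OF assms(4)]
  by (auto split: if_splits)

end

definition piT :: "nat \<Rightarrow> nat set \<Rightarrow> nat set \<Rightarrow> real" where
  "piT g T B = (if g \<le> card B then of_bool (T \<subseteq> B) / real (card B choose g) else 0)"

lemma mean_comb:
  fixes p :: real
  assumes finW: "finite W" and TW: "T \<subseteq> W" and cT: "card T = g" and p: "0 \<le> p" "p \<le> 1"
  shows "(\<Sum>B\<in>Pow W. piT g T B * (p ^ card B * (1 - p) ^ (Suc (card W) - card B)))
         \<le> (1 - p) / real (card W choose g)"
proof -
  define w where "w = card W"
  define s where "s = card (W - T)"
  have finT: "finite T" using finW TW finite_subset by blast
  have sw: "s = w - g" using TW finT cT by (simp add: s_def w_def card_Diff_subset)
  have gw: "g \<le> w" using TW finW cT card_mono w_def by blast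
  define wt where "wt = (\<lambda>B. piT g T B * (p ^ card B * (1 - p) ^ (Suc w - card B)))"
  have step1: "(\<Sum>B\<in>Pow W. wt B) = (\<Sum>B\<in>(\<lambda>C. T \<union> C) ` Pow (W - T). wt B)"
  proof (rule sum.mono_neutral_right)
    show "finite (Pow W)" using finW by simp
    show "(\<lambda>C. T \<union> C) ` Pow (W - T) \<subseteq> Pow W" using TW by auto
    show "\<forall>B\<in>Pow W - (\<lambda>C. T \<union> C) ` Pow (W - T). wt B = 0"
    proof
      fix B assume B: "B \<in> Pow W - (\<lambda>C. T \<union> C) ` Pow (W - T)"
      have "\<not> T \<subseteq> B"
      proof
        assume "T \<subseteq> B"
        then have "B = T \<union> (B - T)" by blast
        moreover have "B - T \<in> Pow (W - T)" using B by auto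
        ultimately show False using B by blast
      qed
      then show "wt B = 0" by (simp add: wt_def piT_def)
    qed
  qed
  also have "\<dots> = (\<Sum>C\<in>Pow (W - T). wt (T \<union> C))"
  proof (rule sum.reindex_cong[where l = "\<lambda>C. T \<union> C"])
    show "inj_on (\<lambda>C. T \<union> C) (Pow (W - T))"
      by (rule inj_onI) blast
  qed auto
  also have "\<dots> = (\<Sum>C\<in>Pow (W - T). (\<lambda>i. p ^ (g + i) * (1 - p) ^ (Suc w - (g + i)) / real ((g + i) choose g)) (card C))"
  proof (intro sum.cong refl)
    fix C assume C: "C \<in> Pow (W - T)"
    have finC: "finite C" using C finW finite_subset by auto
    have cTC: "card (T \<union> C) = g + card C" using C finT finC cT by (subst card_Un_disjoint) auto
    show "wt (T \<union> C) = (\<lambda>i. p ^ (g + i) * (1 - p) ^ (Suc w - (g + i)) / real ((g + i) choose g)) (card C)"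
      by (simp add: wt_def piT_def cTC)
  qed
  also have "\<dots> = (\<Sum>i\<le>s. real (s choose i) * (p ^ (g + i) * (1 - p) ^ (Suc w - (g + i)) / real ((g + i) choose g)))"
    unfolding s_def using finW by (intro sum_Pow_card) auto
  also have "\<dots> = (\<Sum>i\<le>s. (1 - p) * (real (w choose (g + i)) * p ^ (g + i) * (1 - p) ^ (w - (g + i))) / real (w choose g))"
  proof (intro sum.cong refl)
    fix i assume "i \<in> {..s}"
    then have i: "g + i \<le> w" using sw gw by auto
    have cm: "(w choose (g + i)) * ((g + i) choose g) = (w choose g) * ((w - g) choose i)"
      using choose_mult[of g "g + i" w] i by simp
    have pos1: "real ((g + i) choose g) > 0" by simp
    have pos2: "real (w choose g) > 0" using gw by simp
    have cm': "real (s choose i) / real ((g + i) choose g) = real (w choose (g + i)) / real (w choose g)"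
      using cm pos1 pos2 sw by (simp add: field_simps) (metis of_nat_mult)
    have e: "(1 - p) ^ (Suc w - (g + i)) = (1 - p) * (1 - p) ^ (w - (g + i))"
      using i by (simp add: Suc_diff_le)
    show "real (s choose i) * (p ^ (g + i) * (1 - p) ^ (Suc w - (g + i)) / real ((g + i) choose g)) =
        (1 - p) * (real (w choose (g + i)) * p ^ (g + i) * (1 - p) ^ (w - (g + i))) / real (w choose g)"
    proof -
      have "real (s choose i) * (p ^ (g + i) * (1 - p) ^ (Suc w - (g + i)) / real ((g + i) choose g))
          = (real (s choose i) / real ((g + i) choose g)) * p ^ (g + i) * (1 - p) ^ (Suc w - (g + i))"
        by simp
      also have "\<dots> = (real (w choose (g + i)) / real (w choose g)) * p ^ (g + i) * ((1 - p) * (1 - p) ^ (w - (g + i)))"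
        by (simp only: cm' e)
      also have "\<dots> = (1 - p) * (real (w choose (g + i)) * p ^ (g + i) * (1 - p) ^ (w - (g + i))) / real (w choose g)"
        by simp
      finally show ?thesis .
    qed
  qed
  also have "\<dots> = (1 - p) * (\<Sum>i\<le>s. real (w choose (g + i)) * p ^ (g + i) * (1 - p) ^ (w - (g + i))) / real (w choose g)"
    by (simp add: sum_distrib_left sum_divide_distrib)
  also have "(\<Sum>i\<le>s. real (w choose (g + i)) * p ^ (g + i) * (1 - p) ^ (w - (g + i))) \<le> 1"
  proof -
    have "(\<Sum>i\<le>s. real (w choose (g + i)) * p ^ (g + i) * (1 - p) ^ (w - (g + i)))
        = (\<Sum>b\<in>(\<lambda>i. g + i) ` {..s}. real (w choose b) * p ^ b * (1 - p) ^ (w - b))"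
      by (subst sum.reindex) auto
    also have "\<dots> \<le> (\<Sum>b\<le>w. real (w choose b) * p ^ b * (1 - p) ^ (w - b))"
      using p sw gw by (intro sum_mono2) auto
    also have "\<dots> = 1" by (rule binomial_sum_one)
    finally show ?thesis .
  qed
  then have "(1 - p) * (\<Sum>i\<le>s. real (w choose (g + i)) * p ^ (g + i) * (1 - p) ^ (w - (g + i))) / real (w choose g)
       \<le> (1 - p) * 1 / real (w choose g)"
    using p by (intro divide_right_mono mult_left_mono) auto
  finally show ?thesis by (simp add: wt_def w_def)
qed

lemma tail_comb:
  fixes p :: real
  assumes "finite U" "0 \<le> p" "p \<le> 1"
  shows "(\<Sum>B\<in>Pow U. of_bool (card B < g) * (p ^ card B * (1 - p) ^ (card U - card B)))
         \<le> 2 ^ g * (1 - p / 2) ^ card U"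
proof -
  have "(\<Sum>B\<in>Pow U. of_bool (card B < g) * (p ^ card B * (1 - p) ^ (card U - card B)))
      = (\<Sum>i\<le>card U. real (card U choose i) * (of_bool (i < g) * (p ^ i * (1 - p) ^ (card U - i))))"
    by (rule sum_Pow_card[OF assms(1), where \<phi> = "\<lambda>i. of_bool (i < g) * (p ^ i * (1 - p) ^ (card U - i))"])
  also have "\<dots> = (\<Sum>i\<le>card U. if i < g then real (card U choose i) * p ^ i * (1 - p) ^ (card U - i) else 0)"
    by (intro sum.cong) auto
  also have "\<dots> \<le> 2 ^ g * (1 - p / 2) ^ card U" by (rule chernoff_lower) (use assms in auto)
  finally show ?thesis .
qed

context gctx begin

lemma prob_unif: "r < q \<Longrightarrow> measure_pmf.prob (pmf_of_set {..<q}) (if b then {r} else -{r}) = (if b then 1 / real q else 1 - 1 / real q)"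
proof -
  assume r: "r < q"
  have ne: "{..<q} \<noteq> {}" using q_ge by (simp add: lessThan_empty_iff)
  have c1: "{..<q} \<inter> {r} = {r}" using r by auto
  have c2: "card ({..<q} \<inter> - {r}) = q - 1" using r by (simp add: Diff_eq[symmetric] card_Diff_subset)
  have qp: "real q > 0" using q_ge by simp
  show ?thesis using ne c1 c2 q_ge qp
    by (auto simp add: measure_pmf_of_set of_nat_diff field_simps)
qed

lemma prob_A_eq:
  assumes "n < N" "j < F'" "r < q" "B \<subseteq> U"
  shows "measure_pmf.prob plac {c. {u\<in>U. c (u, n, j) = r} = B} =
         (1 / real q) ^ card B * (1 - 1 / real q) ^ (Kp - card B)"
proof -
  define Z where "Z = (\<lambda>u. (u, n, j)) ` U"
  define S where "S = (\<lambda>x::nat\<times>nat\<times>nat. if fst x \<in> B then {r} else -{r})"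
  have ZI: "Z \<subseteq> I" using U_sub assms by (auto simp: Z_def I_def)
  have set_eq: "{c. {u\<in>U. c (u, n, j) = r} = B} = {c. \<forall>x\<in>Z. c x \<in> S x}"
    using assms(4) by (auto simp: Z_def S_def)
  have "measure_pmf.prob plac {c. {u\<in>U. c (u, n, j) = r} = B} =
        (\<Prod>x\<in>Z. measure_pmf.prob (pmf_of_set {..<q}) (S x))"
    unfolding set_eq plac_eq by (rule prob_Pi_pmf_cyl[OF finite_I ZI])
  also have "\<dots> = (\<Prod>u\<in>U. measure_pmf.prob (pmf_of_set {..<q}) (S (u, n, j)))"
    unfolding Z_def by (subst prod.reindex) (auto simp: inj_on_def)
  also have "\<dots> = (\<Prod>u\<in>U. if u \<in> B then 1 / real q else 1 - 1 / real q)"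
    by (intro prod.cong refl) (simp add: S_def prob_unif[OF assms(3)])
  also have "\<dots> = (1 / real q) ^ card B * (1 - 1 / real q) ^ (Kp - card B)"
  proof -
    have "U \<inter> {u. u \<in> B} = B" "U \<inter> - {u. u \<in> B} = U - B" using assms(4) by auto
    moreover have "card (U - B) = Kp - card B"
      using assms(4) finite_U card_U by (simp add: card_Diff_subset finite_subset)
    moreover have "finite B" using assms(4) finite_U finite_subset by blast
    ultimately show ?thesis using finite_U
      by (simp only: prod.If_cases prod_constant)
  qed
  finally show ?thesis .
qed

lemma E_A:
  fixes \<psi> :: "nat set \<Rightarrow> real"
  assumes "n < N" "j < F'" "r < q"
  shows "measure_pmf.expectation plac (\<lambda>c. \<psi> {u\<in>U. c (u, n, j) = r}) =
         (\<Sum>B\<in>Pow U. \<psi> B * ((1 / real q) ^ card B * (1 - 1 / real q) ^ (Kp - card B)))"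
proof -
  have eq: "\<psi> {u\<in>U. c (u, n, j) = r} = (\<Sum>B\<in>Pow U. \<psi> B * indicator {c. {u\<in>U. c (u, n, j) = r} = B} c)" for c
  proof -
    have "(\<Sum>B\<in>Pow U. \<psi> B * indicator {c. {u\<in>U. c (u, n, j) = r} = B} c) =
          (\<Sum>B\<in>Pow U. if B = {u\<in>U. c (u, n, j) = r} then \<psi> B else 0)"
      by (intro sum.cong refl) (auto simp: indicator_def)
    also have "\<dots> = \<psi> {u\<in>U. c (u, n, j) = r}"
      by (subst sum.delta) (auto simp: finite_U)
    finally show ?thesis by simp
  qed
  have "measure_pmf.expectation plac (\<lambda>c. \<psi> {u\<in>U. c (u, n, j) = r}) =
     (\<Sum>B\<in>Pow U. measure_pmf.expectation plac (\<lambda>c. \<psi> B * indicator {c. {u\<in>U. c (u, n, j) = r} = B} c))"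
    unfolding eq by (rule Bochner_Integration.integral_sum) auto
  also have "\<dots> = (\<Sum>B\<in>Pow U. \<psi> B * measure_pmf.prob plac {c. {u\<in>U. c (u, n, j) = r} = B})"
    by (intro sum.cong refl) simp
  also have "\<dots> = (\<Sum>B\<in>Pow U. \<psi> B * ((1 / real q) ^ card B * (1 - 1 / real q) ^ (Kp - card B)))"
    by (intro sum.cong refl) (simp add: prob_A_eq assms)
  finally show ?thesis .
qed

end

context gctx begin

definition "h k T f c = of_bool (k \<notin> A c k f) * pmf (D c k f) T"

lemma pmf_D:
  assumes "k \<notin> A c k f" "card T = g"
  shows "pmf (D c k f) T = piT g T (A c k f)"
proof -
  define B where "B = A c k f"
  have fB: "finite B" using finite_A by (simp add: B_def)
  show ?thesis
  proof (cases "g + 1 \<le> card B")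
    case True
    have ne: "{T. T \<subseteq> B \<and> card T = g} \<noteq> {}"
    proof -
      have "g \<le> card B" using True by simp
      then obtain T where "T \<subseteq> B" "card T = g" by (meson obtain_subset_with_card_n)
      then show ?thesis by blast
    qed
    have fin: "finite {T. T \<subseteq> B \<and> card T = g}" using fB by simp
    have cS: "card {T. T \<subseteq> B \<and> card T = g} = card B choose g" by (rule n_subsets[OF fB])
    have "pmf (D c k f) T = indicator {T. T \<subseteq> B \<and> card T = g} T / real (card B choose g)"
      using True assms ne fin cS by (simp add: D_def B_def[symmetric])
    then show ?thesis using True assms(2) by (simp add: piT_def B_def[symmetric] indicator_def)
  next
    case False
    then have D: "D c k f = return_pmf B" by (simp add: D_def B_def)
    show ?thesis
    proof (cases "card B = g")
      case True
      have "B = T \<longleftrightarrow> T \<subseteq> B" using True assms(2) fB card_subset_eq by blast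
      then show ?thesis using True by (simp add: D piT_def B_def[symmetric] indicator_def)
    next
      case False
      then have "card B < g" using \<open>\<not> g + 1 \<le> card B\<close> by simp
      then have "T \<noteq> B" using assms(2) by auto
      then show ?thesis using \<open>card B < g\<close> by (simp add: D piT_def B_def[symmetric] indicator_def)
    qed
  qed
qed

lemma h_alt:
  assumes "card T = g"
  shows "h k T f c = of_bool (k \<notin> A c k f) * piT g T (A c k f)"
  by (cases "k \<in> A c k f") (auto simp: h_def pmf_D[OF _ assms])

lemma mean_h:
  assumes k: "k \<in> U" and f: "f < F" and T: "T \<subseteq> U - {k}" "card T = g"
  shows "measure_pmf.expectation plac (h k T f) \<le> (1 - 1 / real q) / real ((Kp - 1) choose g)"
proof -
  define p where "p = 1 / real q"
  have p: "0 \<le> p" "p \<le> 1" using q_ge by (auto simp: p_def)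
  define W where "W = U - {k}"
  have cW: "card W = Kp - 1" using k finite_U card_U by (simp add: W_def)
  have SW: "Suc (card W) = Kp" using cW Kp_pos by simp
  have finW: "finite W" using finite_U by (simp add: W_def)
  have "measure_pmf.expectation plac (h k T f) =
     measure_pmf.expectation plac (\<lambda>c. (\<lambda>B. of_bool (k \<notin> B) * piT g T B) {u\<in>U. c (u, d k, f div q) = f mod q})"
  proof -
    have "h k T f = (\<lambda>c. (\<lambda>B. of_bool (k \<notin> B) * piT g T B) {u\<in>U. c (u, d k, f div q) = f mod q})"
      by (rule ext) (simp only: h_alt[OF T(2)] A_def)
    then show ?thesis by simp
  qed
  also have "\<dots> = (\<Sum>B\<in>Pow U. of_bool (k \<notin> B) * piT g T B * (p ^ card B * (1 - p) ^ (Kp - card B)))"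
    unfolding p_def by (rule E_A) (use dk_lt[OF k] div_lt[OF f] mod_lt in auto)
  also have "\<dots> = (\<Sum>B\<in>Pow W. piT g T B * (p ^ card B * (1 - p) ^ (Suc (card W) - card B)))"
  proof (rule sum.mono_neutral_cong_right)
    show "finite (Pow U)" using finite_U by simp
    show "Pow W \<subseteq> Pow U" by (auto simp: W_def)
    show "\<forall>B\<in>Pow U - Pow W. of_bool (k \<notin> B) * piT g T B * (p ^ card B * (1 - p) ^ (Kp - card B)) = 0"
      by (auto simp: W_def)
    show "\<And>B. B \<in> Pow W \<Longrightarrow> of_bool (k \<notin> B) * piT g T B * (p ^ card B * (1 - p) ^ (Kp - card B)) =
        piT g T B * (p ^ card B * (1 - p) ^ (Suc (card W) - card B))"
      using SW by (auto simp: W_def)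
  qed
  also have "\<dots> \<le> (1 - p) / real (card W choose g)"
    by (rule mean_comb[OF finW _ T(2) p]) (use T in \<open>auto simp: W_def\<close>)
  finally show ?thesis by (simp add: p_def cW)
qed

lemma tail_A:
  assumes k: "k \<in> U" and f: "f < F"
  shows "measure_pmf.expectation plac (\<lambda>c. of_bool (k \<notin> A c k f \<and> card (A c k f) < g))
         \<le> 2 ^ g * (1 - (1 / real q) / 2) ^ Kp"
proof -
  define p where "p = 1 / real q"
  have p: "0 \<le> p" "p \<le> 1" using q_ge by (auto simp: p_def)
  have "measure_pmf.expectation plac (\<lambda>c. of_bool (k \<notin> A c k f \<and> card (A c k f) < g)) =
     measure_pmf.expectation plac (\<lambda>c. (\<lambda>B. of_bool (k \<notin> B \<and> card B < g)) {u\<in>U. c (u, d k, f div q) = f mod q})"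
    by (simp add: A_def)
  also have "\<dots> = (\<Sum>B\<in>Pow U. of_bool (k \<notin> B \<and> card B < g) * (p ^ card B * (1 - p) ^ (Kp - card B)))"
    unfolding p_def by (rule E_A) (use dk_lt[OF k] div_lt[OF f] mod_lt in auto)
  also have "\<dots> \<le> (\<Sum>B\<in>Pow U. of_bool (card B < g) * (p ^ card B * (1 - p) ^ (card U - card B)))"
    using p by (intro sum_mono mult_right_mono) (auto simp: card_U)
  also have "\<dots> \<le> 2 ^ g * (1 - p / 2) ^ card U"
    by (rule tail_comb[OF finite_U p])
  finally show ?thesis by (simp only: p_def card_U)
qed

end

lemma real_card_filter: "finite S \<Longrightarrow> real (card {x\<in>S. P x}) = (\<Sum>x\<in>S. of_bool (P x))"
proof -
  assume fS: "finite S"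
  have "real (card {x\<in>S. P x}) = (\<Sum>x\<in>{x\<in>S. P x}. 1)" by simp
  also have "\<dots> = (\<Sum>x\<in>S. if P x then 1 else 0)" by (rule sum.inter_filter[OF fS])
  also have "\<dots> = (\<Sum>x\<in>S. of_bool (P x))" by (intro sum.cong) auto
  finally show ?thesis .
qed

context gctx begin

definition "y k T f cp = (of_bool (k \<notin> A (fst cp) k f \<and> snd cp (k, f) = T) :: real)"
definition "X k T cp = real (card (Vset K q F' d (fst cp) (snd cp) k T))"

lemma X_sum: "k \<in> U \<Longrightarrow> X k T cp = (\<Sum>f<F. y k T f cp)"
proof -
  assume k: "k \<in> U"
  have "Vset K q F' d (fst cp) (snd cp) k T = {f\<in>{..<F}. k \<notin> A (fst cp) k f \<and> snd cp (k, f) = T}"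
    unfolding Vset_def F_def by (simp only: in_storing_iff[OF k])
  then have "X k T cp = real (card {f\<in>{..<F}. k \<notin> A (fst cp) k f \<and> snd cp (k, f) = T})"
    by (simp only: X_def)
  also have "\<dots> = (\<Sum>f\<in>{..<F}. of_bool (k \<notin> A (fst cp) k f \<and> snd cp (k, f) = T))"
    by (rule real_card_filter) simp
  finally show ?thesis by (simp only: y_def)
qed

lemma E_pd_coord:
  assumes k: "k \<in> U" and f: "f < F"
  shows "measure_pmf.expectation (pd c) (\<lambda>P. \<phi> (P (k, f)) :: real) = measure_pmf.expectation (D c k f) \<phi>"
proof -
  have "map_pmf (\<lambda>P. P (k, f)) (pd c) = D c k f"
    unfolding pd_eq using k f U_sub by (subst Pi_pmf_component) (auto simp: Dfull_U)
  then have "measure_pmf.expectation (map_pmf (\<lambda>P. P (k, f)) (pd c)) \<phi> = measure_pmf.expectation (D c k f) \<phi>"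
    by simp
  then show ?thesis by simp
qed

lemma E_pd_y:
  assumes k: "k \<in> U" and f: "f < F"
  shows "measure_pmf.expectation (pd c) (\<lambda>P. y k T f (c, P)) = h k T f c"
proof -
  have "measure_pmf.expectation (pd c) (\<lambda>P. y k T f (c, P)) =
        measure_pmf.expectation (pd c) (\<lambda>P. of_bool (k \<notin> A c k f) * (\<lambda>z. indicator {T} z) (P (k, f)))"
    by (simp add: y_def indicator_def)
  also have "\<dots> = of_bool (k \<notin> A c k f) * measure_pmf.expectation (pd c) (\<lambda>P. (\<lambda>z. indicator {T} z) (P (k, f)))"
    by simp
  also have "\<dots> = of_bool (k \<notin> A c k f) * measure_pmf.expectation (D c k f) (\<lambda>z. indicator {T} z)"
    by (subst E_pd_coord[OF k f]) simp
  also have "\<dots> = h k T f c" by (simp add: h_def measure_pmf_single)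
  finally show ?thesis .
qed

lemma E_y: "k \<in> U \<Longrightarrow> f < F \<Longrightarrow> measure_pmf.expectation Jt (y k T f) = measure_pmf.expectation plac (h k T f)"
  by (simp add: E_Jt E_pd_y)

lemma h_dep: "A c k f = A c' k f \<Longrightarrow> h k T f c = h k T f c'"
  by (simp add: h_def D_def)

lemma E_pd_yy:
  assumes k: "k \<in> U" and f: "f < F" and f': "f' < F" and ff: "f \<noteq> f'"
  shows "measure_pmf.expectation (pd c) (\<lambda>P. y k T f (c, P) * y k T f' (c, P)) = h k T f c * h k T f' c"
proof -
  have "measure_pmf.expectation (pd c) (\<lambda>P. y k T f (c, P) * y k T f' (c, P)) =
     measure_pmf.expectation (pd c) (\<lambda>P. y k T f (c, P)) * measure_pmf.expectation (pd c) (\<lambda>P. y k T f' (c, P))"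
    unfolding pd_eq
  proof (rule expectation_Pi_indep[where J = "{(k, f)}"])
    show "finite ({..<K} \<times> {..<F})" by simp
    show "{(k, f)} \<subseteq> {..<K} \<times> {..<F}" using k f U_sub by auto
    show "\<And>x. x \<in> {..<K} \<times> {..<F} \<Longrightarrow> finite (set_pmf (Dfull c x))" by (rule finite_Dfull)
    show "\<And>P P'. \<forall>x\<in>{(k, f)}. P x = P' x \<Longrightarrow> y k T f (c, P) = y k T f (c, P')"
      by (simp add: y_def)
    show "\<And>P P'. \<forall>x\<in>{..<K} \<times> {..<F} - {(k, f)}. P x = P' x \<Longrightarrow> y k T f' (c, P) = y k T f' (c, P')"
      using k f' ff U_sub by (auto simp: y_def)
  qed
  then show ?thesis by (simp add: E_pd_y k f f')
qed

lemma E_hh: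
  assumes k: "k \<in> U" and f: "f < F" and f': "f' < F" and ff: "f div q \<noteq> f' div q"
  shows "measure_pmf.expectation plac (\<lambda>c. h k T f c * h k T f' c) =
         measure_pmf.expectation plac (h k T f) * measure_pmf.expectation plac (h k T f')"
proof -
  define J where "J = {..<K} \<times> {d k} \<times> {f div q}"
  have Jsub: "J \<subseteq> I" using dk_lt[OF k] div_lt[OF f] by (auto simp: I_def J_def)
  have sq: "set_pmf (pmf_of_set {..<q}) = {..<q}" using q_ge by (intro set_pmf_of_set) (auto simp: lessThan_empty_iff)
  have fin: "\<And>x. x \<in> I \<Longrightarrow> finite (set_pmf ((\<lambda>_. pmf_of_set {..<q}) x))" using sq by simp
  have dep1: "h k T f c = h k T f c'" if H: "\<forall>x\<in>J. c x = c' x" for c c'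
  proof (rule h_dep)
    have "\<forall>u\<in>U. c (u, d k, f div q) = c' (u, d k, f div q)"
    proof
      fix u assume "u \<in> U"
      then have "u < K" using U_sub by auto
      then have "(u, d k, f div q) \<in> J" by (simp add: J_def)
      then show "c (u, d k, f div q) = c' (u, d k, f div q)" using H by blast
    qed
    then show "A c k f = A c' k f" by (auto simp: A_def)
  qed
  have dep2: "h k T f' c = h k T f' c'" if H: "\<forall>x\<in>I - J. c x = c' x" for c c'
  proof (rule h_dep)
    have "\<forall>u\<in>U. c (u, d k, f' div q) = c' (u, d k, f' div q)"
    proof
      fix u assume "u \<in> U"
      then have "u < K" using U_sub by auto
      moreover have "d k < N" by (rule dk_lt[OF k])
      moreover have "f' div q < F'" by (rule div_lt[OF f'])
      ultimately have "(u, d k, f' div q) \<in> I" by (simp add: I_def)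
      moreover have "(u, d k, f' div q) \<notin> J" using ff by (simp add: J_def)
      ultimately have "(u, d k, f' div q) \<in> I - J" by blast
      then show "c (u, d k, f' div q) = c' (u, d k, f' div q)" using H by blast
    qed
    then show "A c k f' = A c' k f'" by (auto simp: A_def)
  qed
  show ?thesis unfolding plac_eq
    by (rule expectation_Pi_indep[OF finite_I Jsub fin dep1 dep2])
qed

lemma A_disj: "f div q = f' div q \<Longrightarrow> f \<noteq> f' \<Longrightarrow> A c k f \<inter> A c k' f' = {} \<or> d k \<noteq> d k'"
proof -
  assume "f div q = f' div q" "f \<noteq> f'"
  then have "f mod q \<noteq> f' mod q" by (metis div_mult_mod_eq)
  then show ?thesis using \<open>f div q = f' div q\<close> by (auto simp: A_def)
qed

lemma yy_zero:
  assumes k: "k \<in> U" and f: "f < F" and f': "f' < F" and ff: "f \<noteq> f'" "f div q = f' div q"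
    and T: "T \<noteq> {}" and P: "P \<in> set_pmf (pd c)"
  shows "y k T f (c, P) * y k T f' (c, P) = 0"
proof (rule ccontr)
  assume "y k T f (c, P) * y k T f' (c, P) \<noteq> 0"
  then have h1: "k \<notin> A c k f" "P (k, f) = T" "k \<notin> A c k f'" "P (k, f') = T" by (auto simp: y_def)
  have "T \<subseteq> A c k f" using supp_facts(1)[OF P k f h1(1)] h1 by simp
  moreover have "T \<subseteq> A c k f'" using supp_facts(1)[OF P k f' h1(3)] h1 by simp
  moreover have "A c k f \<inter> A c k f' = {}" using A_disj[OF ff(2) ff(1), of c k k] by simp
  ultimately show False using T by blast
qed

lemma E_yy_le:
  assumes k: "k \<in> U" and f: "f < F" and f': "f' < F" and T: "T \<noteq> {}"
  shows "measure_pmf.expectation Jt (\<lambda>cp. y k T f cp * y k T f' cp)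
     \<le> of_bool (f = f') * measure_pmf.expectation Jt (y k T f)
       + measure_pmf.expectation Jt (y k T f) * measure_pmf.expectation Jt (y k T f')"
proof -
  have nn: "0 \<le> measure_pmf.expectation Jt (y k T f')" for f'
    by (rule integral_nonneg_AE) (auto simp: y_def)
  consider "f = f'" | "f \<noteq> f'" "f div q = f' div q" | "f div q \<noteq> f' div q" by blast
  then show ?thesis
  proof cases
    case 1
    have yy: "y k T f cp * y k T f cp = y k T f cp" for cp by (simp add: y_def)
    have "(\<lambda>cp. y k T f cp * y k T f' cp) = y k T f" unfolding 1[symmetric] by (rule ext) (rule yy)
    then show ?thesis using 1 nn[of f] by (simp add: mult_nonneg_nonneg)
  next
    case 2
    have "measure_pmf.expectation Jt (\<lambda>cp. y k T f cp * y k T f' cp) =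
       measure_pmf.expectation plac (\<lambda>c. measure_pmf.expectation (pd c) (\<lambda>P. y k T f (c, P) * y k T f' (c, P)))"
      by (simp add: E_Jt)
    also have "\<dots> = measure_pmf.expectation plac (\<lambda>c. measure_pmf.expectation (pd c) (\<lambda>P. 0::real))"
      by (intro Bochner_Integration.integral_cong refl integral_cong_AE AE_pmfI yy_zero[OF k f f' 2(1) 2(2) T]) auto
    also have "\<dots> = 0" by simp
    finally show ?thesis using 2 nn[of f] nn[of f'] by simp
  next
    case 3
    then have ne: "f \<noteq> f'" by auto
    have "measure_pmf.expectation Jt (\<lambda>cp. y k T f cp * y k T f' cp) =
       measure_pmf.expectation plac (\<lambda>c. h k T f c * h k T f' c)"
      by (simp add: E_Jt E_pd_yy[OF k f f' ne])
    also have "\<dots> = measure_pmf.expectation Jt (y k T f) * measure_pmf.expectation Jt (y k T f')"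
      by (simp add: E_hh[OF k f f' 3] E_y[OF k f] E_y[OF k f'])
    finally show ?thesis using ne by simp
  qed
qed

lemma second_moment:
  assumes k: "k \<in> U" and T: "T \<noteq> {}"
  shows "measure_pmf.expectation Jt (\<lambda>cp. (X k T cp - measure_pmf.expectation Jt (X k T))\<^sup>2)
         \<le> measure_pmf.expectation Jt (X k T)"
proof -
  define e where "e = measure_pmf.expectation Jt (X k T)"
  define ey where "ey f = measure_pmf.expectation Jt (y k T f)" for f
  have e_sum: "e = (\<Sum>f<F. ey f)"
    unfolding e_def ey_def X_sum[OF k] by (rule Bochner_Integration.integral_sum) auto
  have "measure_pmf.expectation Jt (\<lambda>cp. (X k T cp)\<^sup>2) =
        measure_pmf.expectation Jt (\<lambda>cp. \<Sum>f<F. \<Sum>f'<F. y k T f cp * y k T f' cp)"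
    by (simp add: X_sum[OF k] power2_eq_square sum_product)
  also have "\<dots> = (\<Sum>f<F. \<Sum>f'<F. measure_pmf.expectation Jt (\<lambda>cp. y k T f cp * y k T f' cp))"
    by (simp add: Bochner_Integration.integral_sum)
  also have "\<dots> \<le> (\<Sum>f<F. \<Sum>f'<F. of_bool (f = f') * ey f + ey f * ey f')"
    unfolding ey_def by (intro sum_mono E_yy_le[OF k _ _ T]) auto
  also have "\<dots> = e + e\<^sup>2"
  proof -
    have d1: "(\<Sum>f'<F. of_bool (f = f') * ey f) = ey f" if "f < F" for f
    proof -
      have "(\<Sum>f'<F. of_bool (f = f') * ey f) = (\<Sum>f'\<in>{..<F}. if f = f' then ey f else 0)"
        by (intro sum.cong) auto
      also have "\<dots> = ey f" using that by (subst sum.delta') auto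
      finally show ?thesis .
    qed
    have "(\<Sum>f<F. \<Sum>f'<F. of_bool (f = f') * ey f + ey f * ey f') =
          (\<Sum>f<F. ey f + (\<Sum>f'<F. ey f * ey f'))"
      by (intro sum.cong refl) (simp only: sum.distrib d1 lessThan_iff)
    also have "\<dots> = (\<Sum>f<F. ey f) + (\<Sum>f<F. ey f) * (\<Sum>f'<F. ey f')"
      by (simp only: sum.distrib sum_product)
    finally show ?thesis by (simp only: e_sum power2_eq_square)
  qed
  finally have m2: "measure_pmf.expectation Jt (\<lambda>cp. (X k T cp)\<^sup>2) \<le> e + e\<^sup>2" .
  have "measure_pmf.expectation Jt (\<lambda>cp. (X k T cp - e)\<^sup>2) =
        measure_pmf.expectation Jt (\<lambda>cp. (X k T cp)\<^sup>2) - 2 * e * measure_pmf.expectation Jt (X k T) + e\<^sup>2"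
  proof -
    have fe: "(\<lambda>cp. (X k T cp - e)\<^sup>2) = (\<lambda>cp. ((X k T cp)\<^sup>2 - (2 * e) * X k T cp) + e\<^sup>2)"
      by (rule ext) (simp add: power2_diff)
    have "measure_pmf.expectation Jt (\<lambda>cp. ((X k T cp)\<^sup>2 - (2 * e) * X k T cp) + e\<^sup>2)
      = measure_pmf.expectation Jt (\<lambda>cp. (X k T cp)\<^sup>2 - (2 * e) * X k T cp) + e\<^sup>2"
      by (subst Bochner_Integration.integral_add) auto
    also have "measure_pmf.expectation Jt (\<lambda>cp. (X k T cp)\<^sup>2 - (2 * e) * X k T cp)
      = measure_pmf.expectation Jt (\<lambda>cp. (X k T cp)\<^sup>2) - measure_pmf.expectation Jt (\<lambda>cp. (2 * e) * X k T cp)"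
      by (rule Bochner_Integration.integral_diff) auto
    also have "measure_pmf.expectation Jt (\<lambda>cp. (2 * e) * X k T cp) = 2 * e * measure_pmf.expectation Jt (X k T)"
      by (rule integral_mult_right_zero)
    finally show ?thesis by (simp only: fe)
  qed
  also have "\<dots> = measure_pmf.expectation Jt (\<lambda>cp. (X k T cp)\<^sup>2) - e\<^sup>2"
    by (simp only: e_def[symmetric] power2_eq_square)
  also have "\<dots> \<le> e" using m2 by simp
  finally show ?thesis by (simp only: e_def)
qed

end

lemma real_Max_le:
  assumes "finite S" "S \<noteq> {}" "\<And>k. k \<in> S \<Longrightarrow> real (\<phi> k) \<le> b"
  shows "real (Max (\<phi> ` S)) \<le> b"
proof -
  have "Max (\<phi> ` S) \<in> \<phi> ` S" using assms by (intro Max_in) auto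
  then obtain k where "k \<in> S" "Max (\<phi> ` S) = \<phi> k" by auto
  then show ?thesis using assms(3) by simp
qed

lemma key_ineq:
  fixes x e \<mu> t :: real
  assumes "e \<le> \<mu>" "0 < t" "0 \<le> s"
  shows "x \<le> \<mu> + t / 2 + ((x - e)\<^sup>2 + s) / (2 * t)"
proof (cases "x \<le> \<mu>")
  case True
  have "0 \<le> ((x - e)\<^sup>2 + s) / (2 * t)" using assms by simp
  then show ?thesis using True assms by linarith
next
  case False
  define yy where "yy = x - e"
  have "0 \<le> (yy - t)\<^sup>2" by simp
  then have "2 * t * yy \<le> t\<^sup>2 + yy\<^sup>2" by (simp add: power2_eq_square algebra_simps)
  then have "yy \<le> t / 2 + yy\<^sup>2 / (2 * t)" using assms(2)
    by (simp add: field_simps power2_eq_square)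
  moreover have "yy\<^sup>2 / (2 * t) \<le> (yy\<^sup>2 + s) / (2 * t)" using assms by (intro divide_right_mono) auto
  ultimately show ?thesis using assms(1) False by (simp add: yy_def)
qed

context gctx begin

definition "S1 = {Ss \<in> Pow U. card Ss = g + 1}"
definition "S2 = {Ss \<in> Pow U. Ss \<noteq> {} \<and> card Ss \<noteq> g + 1}"

lemma finite_S1: "finite S1" using finite_U by (simp add: S1_def)
lemma finite_S2: "finite S2" using finite_U by (simp add: S2_def)

lemma split_Pow: "Pow U - {{}} = S1 \<union> S2" "S1 \<inter> S2 = {}"
  by (auto simp: S1_def S2_def)

lemma tail_single:
  assumes P: "P \<in> set_pmf (pd c)" and k: "k \<in> U" and f: "f < F"
  shows "(\<Sum>Ss\<in>S2. of_bool (k \<in> Ss) * y k (Ss - {k}) f (c, P))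
         \<le> of_bool (k \<notin> A c k f \<and> card (A c k f) < g)"
proof (cases "k \<in> A c k f")
  case True
  then show ?thesis by (simp add: y_def)
next
  case False
  define T0 where "T0 = P (k, f)"
  have T0A: "T0 \<subseteq> A c k f" using supp_facts(1)[OF P k f False] by (simp add: T0_def)
  have kT0: "k \<notin> T0" using T0A False by blast
  have finT0: "finite T0" using T0A finite_A finite_subset by blast
  have "(\<Sum>Ss\<in>S2. of_bool (k \<in> Ss) * y k (Ss - {k}) f (c, P)) = (\<Sum>Ss\<in>S2. if Ss = insert k T0 then 1 else 0)"
  proof (intro sum.cong refl)
    fix Ss
    have "(k \<in> Ss \<and> P (k, f) = Ss - {k}) \<longleftrightarrow> Ss = insert k T0"
      using kT0 by (auto simp: T0_def)
    then show "of_bool (k \<in> Ss) * y k (Ss - {k}) f (c, P) = (if Ss = insert k T0 then 1 else 0)"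
      using False by (auto simp: y_def)
  qed
  also have "\<dots> = (if insert k T0 \<in> S2 then 1 else 0)"
    using finite_S2 by (subst sum.delta) auto
  also have "\<dots> \<le> of_bool (k \<notin> A c k f \<and> card (A c k f) < g)"
  proof (cases "insert k T0 \<in> S2")
    case True
    then have "card (insert k T0) \<noteq> g + 1" by (simp add: S2_def)
    then have "card T0 \<noteq> g" using kT0 finT0 by simp
    then have "card (A c k f) < g" using supp_facts(3)[OF P k f False] by (simp add: T0_def)
    then show ?thesis using False True by simp
  qed simp
  finally show ?thesis .
qed

lemma S2_part:
  assumes P: "P \<in> set_pmf (pd c)"
  shows "(\<Sum>Ss\<in>S2. \<Sum>k\<in>Ss. X k (Ss - {k}) (c, P))
         \<le> (\<Sum>k\<in>U. \<Sum>f<F. of_bool (k \<notin> A c k f \<and> card (A c k f) < g))"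
proof -
  have "(\<Sum>Ss\<in>S2. \<Sum>k\<in>Ss. X k (Ss - {k}) (c, P)) = (\<Sum>Ss\<in>S2. \<Sum>k\<in>U. of_bool (k \<in> Ss) * X k (Ss - {k}) (c, P))"
  proof (rule sum.cong[OF refl])
    fix Ss assume "Ss \<in> S2"
    then have "Ss \<subseteq> U" by (simp add: S2_def)
    then show "(\<Sum>k\<in>Ss. X k (Ss - {k}) (c, P)) = (\<Sum>k\<in>U. of_bool (k \<in> Ss) * X k (Ss - {k}) (c, P))"
      using finite_U by (intro sum.mono_neutral_cong_left) auto
  qed
  also have "\<dots> = (\<Sum>k\<in>U. \<Sum>Ss\<in>S2. of_bool (k \<in> Ss) * X k (Ss - {k}) (c, P))"
    by (rule sum.swap)
  also have "\<dots> = (\<Sum>k\<in>U. \<Sum>f<F. \<Sum>Ss\<in>S2. of_bool (k \<in> Ss) * y k (Ss - {k}) f (c, P))"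
  proof (rule sum.cong[OF refl])
    fix k assume k: "k \<in> U"
    show "(\<Sum>Ss\<in>S2. of_bool (k \<in> Ss) * X k (Ss - {k}) (c, P)) =
          (\<Sum>f<F. \<Sum>Ss\<in>S2. of_bool (k \<in> Ss) * y k (Ss - {k}) f (c, P))"
      by (simp add: X_sum[OF k] sum_distrib_left sum.swap[of _ S2])
  qed
  also have "\<dots> \<le> (\<Sum>k\<in>U. \<Sum>f<F. of_bool (k \<notin> A c k f \<and> card (A c k f) < g))"
    by (intro sum_mono tail_single[OF P]) auto
  finally show ?thesis .
qed

lemma det_bound:
  assumes P: "P \<in> set_pmf (pd c)" and t: "0 < t"
    and e: "\<And>Ss k. Ss \<in> S1 \<Longrightarrow> k \<in> Ss \<Longrightarrow> e k (Ss - {k}) \<le> \<mu>"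
  shows "group_cost K q F' d c P U \<le>
     ((\<Sum>Ss\<in>S1. \<mu> + t / 2 + (\<Sum>k\<in>Ss. (X k (Ss - {k}) (c, P) - e k (Ss - {k}))\<^sup>2) / (2 * t))
      + (\<Sum>k\<in>U. \<Sum>f<F. of_bool (k \<notin> A c k f \<and> card (A c k f) < g))) / real F"
proof -
  define Mx where "Mx Ss = real (Max ((\<lambda>k. card (Vset K q F' d c P k (Ss - {k}))) ` Ss))" for Ss
  have gc: "group_cost K q F' d c P U = (\<Sum>Ss\<in>Pow U - {{}}. Mx Ss) / real F"
    by (simp add: group_cost_def Mx_def F_def)
  have "(\<Sum>Ss\<in>Pow U - {{}}. Mx Ss) = (\<Sum>Ss\<in>S1. Mx Ss) + (\<Sum>Ss\<in>S2. Mx Ss)"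
    unfolding split_Pow(1) by (rule sum.union_disjoint[OF finite_S1 finite_S2 split_Pow(2)])
  also have "(\<Sum>Ss\<in>S1. Mx Ss) \<le> (\<Sum>Ss\<in>S1. \<mu> + t / 2 + (\<Sum>k\<in>Ss. (X k (Ss - {k}) (c, P) - e k (Ss - {k}))\<^sup>2) / (2 * t))"
  proof (intro sum_mono)
    fix Ss assume Ss: "Ss \<in> S1"
    have finSs: "finite Ss" using Ss finite_U finite_subset by (auto simp: S1_def)
    have neSs: "Ss \<noteq> {}" using Ss by (auto simp: S1_def)
    show "Mx Ss \<le> \<mu> + t / 2 + (\<Sum>k\<in>Ss. (X k (Ss - {k}) (c, P) - e k (Ss - {k}))\<^sup>2) / (2 * t)"
      unfolding Mx_def
    proof (rule real_Max_le[OF finSs neSs])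
      fix k assume k: "k \<in> Ss"
      define s where "s = (\<Sum>k'\<in>Ss - {k}. (X k' (Ss - {k'}) (c, P) - e k' (Ss - {k'}))\<^sup>2)"
      have s0: "0 \<le> s" unfolding s_def by (intro sum_nonneg) auto
      have split: "(\<Sum>k\<in>Ss. (X k (Ss - {k}) (c, P) - e k (Ss - {k}))\<^sup>2) =
          (X k (Ss - {k}) (c, P) - e k (Ss - {k}))\<^sup>2 + s"
        unfolding s_def using finSs k by (subst sum.remove) auto
      have kx: "X k (Ss - {k}) (c, P) \<le> \<mu> + t / 2 + ((X k (Ss - {k}) (c, P) - e k (Ss - {k}))\<^sup>2 + s) / (2 * t)"
        by (rule key_ineq[OF e[OF Ss k] t s0])
      have xeq: "X k (Ss - {k}) (c, P) = real (card (Vset K q F' d c P k (Ss - {k})))" by (simp add: X_def)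
      show "real (card (Vset K q F' d c P k (Ss - {k}))) \<le>
          \<mu> + t / 2 + (\<Sum>k\<in>Ss. (X k (Ss - {k}) (c, P) - e k (Ss - {k}))\<^sup>2) / (2 * t)"
        using kx by (simp only: split xeq)
    qed
  qed
  also have "(\<Sum>Ss\<in>S2. Mx Ss) \<le> (\<Sum>Ss\<in>S2. \<Sum>k\<in>Ss. X k (Ss - {k}) (c, P))"
  proof (intro sum_mono)
    fix Ss assume Ss: "Ss \<in> S2"
    have finSs: "finite Ss" using Ss finite_U finite_subset by (auto simp: S2_def)
    have neSs: "Ss \<noteq> {}" using Ss by (auto simp: S2_def)
    show "Mx Ss \<le> (\<Sum>k\<in>Ss. X k (Ss - {k}) (c, P))"
      unfolding Mx_def
    proof (rule real_Max_le[OF finSs neSs])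
      fix k assume k: "k \<in> Ss"
      have "X k (Ss - {k}) (c, P) \<le> (\<Sum>k\<in>Ss. X k (Ss - {k}) (c, P))"
        by (rule member_le_sum[OF k _ finSs]) (simp add: X_def)
      then show "real (card (Vset K q F' d c P k (Ss - {k}))) \<le> (\<Sum>k\<in>Ss. X k (Ss - {k}) (c, P))"
        by (simp add: X_def)
    qed
  qed
  also have "(\<Sum>Ss\<in>S2. \<Sum>k\<in>Ss. X k (Ss - {k}) (c, P)) \<le> (\<Sum>k\<in>U. \<Sum>f<F. of_bool (k \<notin> A c k f \<and> card (A c k f) < g))"
    by (rule S2_part[OF P])
  finally have "(\<Sum>Ss\<in>Pow U - {{}}. Mx Ss) \<le> (\<Sum>Ss\<in>S1. \<mu> + t / 2 + (\<Sum>k\<in>Ss. (X k (Ss - {k}) (c, P) - e k (Ss - {k}))\<^sup>2) / (2 * t))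
      + (\<Sum>k\<in>U. \<Sum>f<F. of_bool (k \<notin> A c k f \<and> card (A c k f) < g))" by simp
  then show ?thesis unfolding gc using F_pos by (intro divide_right_mono) auto
qed

end

lemma pow2_ge: "7 \<le> g \<Longrightarrow> 5 * (g + 1) \<le> (2::nat) ^ g"
proof (induction g rule: dec_induct)
  case base then show ?case by simp
next
  case (step n) then show ?case by simp
qed

lemma exp32: "4 \<le> exp (3/2 :: real)"
proof -
  have "(9/8::real) \<le> exp (1/8)" using exp_ge_add_one_self[of "1/8::real"] by simp
  then have "(9/8::real) ^ 12 \<le> exp (1/8) ^ 12" by (intro power_mono) auto
  also have "exp (1/8::real) ^ 12 = exp (12 * (1/8))" by (subst exp_of_nat_mult[symmetric]) simp
  also have "(12 * (1/8::real)) = 3/2" by simp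
  finally have "(9/8::real) ^ 12 \<le> exp (3/2)" .
  moreover have "(4::real) \<le> (9/8)^12" by (simp add: power_divide)
  ultimately show ?thesis by linarith
qed

lemma beta_bound:
  fixes q Kp g :: nat
  assumes g: "7 \<le> g" and q: "1 \<le> q" and Kq: "3 * real g * real q \<le> real Kp"
  shows "(g + 1) * (2 ^ g * (1 - (1 / real q) / 2) ^ Kp) \<le> 1 / 5"
proof -
  define x where "x = (1 / real q) / 2"
  have x0: "0 \<le> x" "x \<le> 1" using q by (auto simp: x_def)
  have "(1 - x) ^ Kp \<le> exp (- x) ^ Kp"
    using exp_ge_add_one_self[of "-x"] x0 by (intro power_mono) auto
  also have "\<dots> = exp (- (real Kp * x))" by (subst exp_of_nat_mult[symmetric]) simp
  also have "\<dots> \<le> exp (- (3 / 2 * real g))"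
  proof -
    have "3 / 2 * real g \<le> real Kp * x" using Kq q by (simp add: x_def field_simps)
    then show ?thesis by simp
  qed
  also have "exp (- (3 / 2 * real g)) = inverse (exp (3/2) ^ g)"
    by (simp add: exp_minus exp_of_nat_mult[symmetric] mult.commute)
  also have "\<dots> \<le> inverse (4 ^ g)"
    using exp32 by (intro le_imp_inverse_le power_mono) auto
  finally have b: "(1 - x) ^ Kp \<le> inverse (4 ^ g)" .
  have "2 ^ g * (1 - x) ^ Kp \<le> 2 ^ g * inverse (4 ^ g)"
    using b by (intro mult_left_mono) auto
  also have "(2::real) ^ g * inverse (4 ^ g) = inverse (2 ^ g)"
    by (simp add: field_simps power_mult_distrib[symmetric])
  finally have c: "2 ^ g * (1 - x) ^ Kp \<le> inverse (2 ^ g)" .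
  have "real (g + 1) * (2 ^ g * (1 - x) ^ Kp) \<le> real (g + 1) * inverse (2 ^ g)"
    using c by (intro mult_left_mono) auto
  also have "\<dots> \<le> 1 / 5"
  proof -
    have "real (5 * (g + 1)) \<le> real ((2::nat) ^ g)" using pow2_ge[OF g] by linarith
    then have "5 * real (g + 1) \<le> 2 ^ g" by simp
    then show ?thesis by (simp add: field_simps)
  qed
  finally show ?thesis by (simp add: x_def)
qed


context gctx begin

lemma card_S1: "card S1 = Kp choose (g + 1)"
proof -
  have "S1 = {Ss. Ss \<subseteq> U \<and> card Ss = g + 1}" by (auto simp: S1_def)
  then show ?thesis using n_subsets[OF finite_U] card_U by simp
qed

lemma set_Jt: "cp \<in> set_pmf Jt \<Longrightarrow> snd cp \<in> set_pmf (pd (fst cp))"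
  by (auto simp: Jt_def)

lemma E_X_le:
  assumes k: "k \<in> U" and T: "T \<subseteq> U - {k}" "card T = g"
  shows "measure_pmf.expectation Jt (X k T) \<le> real F * ((1 - 1 / real q) / real ((Kp - 1) choose g))"
proof -
  have Xe: "X k T = (\<lambda>cp. \<Sum>f<F. y k T f cp)" by (rule ext) (rule X_sum[OF k])
  have "measure_pmf.expectation Jt (X k T) = (\<Sum>f<F. measure_pmf.expectation Jt (y k T f))"
    unfolding Xe by (rule Bochner_Integration.integral_sum) auto
  also have "\<dots> = (\<Sum>f<F. measure_pmf.expectation plac (h k T f))"
    by (intro sum.cong refl) (simp add: E_y[OF k])
  also have "\<dots> \<le> (\<Sum>f<F. (1 - 1 / real q) / real ((Kp - 1) choose g))"
    by (intro sum_mono mean_h[OF k _ T]) auto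
  also have "\<dots> = real F * ((1 - 1 / real q) / real ((Kp - 1) choose g))" by simp
  finally show ?thesis .
qed

lemma group_expect:
  assumes g7: "7 \<le> g" and F'eq: "F' = 100 * (g + 1) * ((Kp - 1) choose g)"
    and Kq: "3 * real g * real q \<le> real Kp"
  shows "measure_pmf.expectation Jt (\<lambda>cp. group_cost K q F' d (fst cp) (snd cp) U)
         \<le> 4 / 3 * real Kp / real (g + 1)"
proof -
  define B where "B = real ((Kp - 1) choose g)"
  have B0: "0 < B" using gKp by (simp add: B_def)
  define \<mu> where "\<mu> = real F * ((1 - 1 / real q) / B)"
  have \<mu>eq: "\<mu> = (real q - 1) * 100 * real (g + 1)"
  proof -
    have "real F = real q * (100 * real (g + 1) * B)" unfolding F_def by (simp add: F'eq B_def)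
    then show ?thesis using B0 q_ge by (simp add: \<mu>_def field_simps)
  qed
  have \<mu>ge: "100 * real (g + 1) \<le> \<mu>"
  proof -
    have q1: "1 \<le> real q - 1" using q_ge by simp
    have "100 * real (g + 1) = 1 * (100 * real (g + 1))" by simp
    also have "\<dots> \<le> (real q - 1) * (100 * real (g + 1))" using q1 by (intro mult_right_mono) auto
    finally have "100 * real (g + 1) \<le> (real q - 1) * (100 * real (g + 1))" .
    then show ?thesis by (simp only: \<mu>eq mult.assoc)
  qed
  define t where "t = \<mu> / 10"
  have t0: "0 < t" using \<mu>ge by (simp add: t_def)
  define e where "e k T = measure_pmf.expectation Jt (X k T)" for k T
  define \<beta> where "\<beta> = 2 ^ g * (1 - (1 / real q) / 2) ^ Kp"
  have S1mem: "Ss \<subseteq> U" "card Ss = g + 1" "k \<in> Ss \<Longrightarrow> Ss - {k} \<subseteq> U - {k}"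
     "k \<in> Ss \<Longrightarrow> card (Ss - {k}) = g" if "Ss \<in> S1" for Ss k
    using that finite_U by (auto simp: S1_def finite_subset)
  have e\<mu>: "e k (Ss - {k}) \<le> \<mu>" if "Ss \<in> S1" "k \<in> Ss" for Ss k
    unfolding e_def \<mu>_def B_def
    by (rule E_X_le) (use S1mem[OF that(1)] that in auto)
  define Bnd where "Bnd cp = ((\<Sum>Ss\<in>S1. \<mu> + t / 2 + (\<Sum>k\<in>Ss. (X k (Ss - {k}) cp - e k (Ss - {k}))\<^sup>2) / (2 * t))
      + (\<Sum>k\<in>U. \<Sum>f<F. of_bool (k \<notin> A (fst cp) k f \<and> card (A (fst cp) k f) < g))) / real F" for cp
  have "measure_pmf.expectation Jt (\<lambda>cp. group_cost K q F' d (fst cp) (snd cp) U)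
      \<le> measure_pmf.expectation Jt Bnd"
  proof (rule integral_mono_AE)
    show "AE cp in measure_pmf Jt. group_cost K q F' d (fst cp) (snd cp) U \<le> Bnd cp"
    proof (rule AE_pmfI)
      fix cp assume "cp \<in> set_pmf Jt"
      then have P: "snd cp \<in> set_pmf (pd (fst cp))" by (rule set_Jt)
      have "group_cost K q F' d (fst cp) (snd cp) U \<le>
        ((\<Sum>Ss\<in>S1. \<mu> + t / 2 + (\<Sum>k\<in>Ss. (X k (Ss - {k}) (fst cp, snd cp) - e k (Ss - {k}))\<^sup>2) / (2 * t))
         + (\<Sum>k\<in>U. \<Sum>f<F. of_bool (k \<notin> A (fst cp) k f \<and> card (A (fst cp) k f) < g))) / real F"
        by (rule det_bound[where e = e and \<mu> = \<mu>, OF P t0 e\<mu>])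
      then show "group_cost K q F' d (fst cp) (snd cp) U \<le> Bnd cp" by (simp add: Bnd_def)
    qed
  qed auto
  also have "measure_pmf.expectation Jt Bnd =
     ((\<Sum>Ss\<in>S1. \<mu> + t / 2 + (\<Sum>k\<in>Ss. measure_pmf.expectation Jt (\<lambda>cp. (X k (Ss - {k}) cp - e k (Ss - {k}))\<^sup>2)) / (2 * t))
      + (\<Sum>k\<in>U. \<Sum>f<F. measure_pmf.expectation plac (\<lambda>c. of_bool (k \<notin> A c k f \<and> card (A c k f) < g)))) / real F"
  proof -
    define Z where "Z Ss k cp = (X k (Ss - {k}) cp - e k (Ss - {k}))\<^sup>2" for Ss k cp
    define W where "W k f (cp :: (nat \<times> nat \<times> nat \<Rightarrow> nat) \<times> (nat \<times> nat \<Rightarrow> nat set)) = (of_bool (k \<notin> A (fst cp) k f \<and> card (A (fst cp) k f) < g) :: real)" for k f cp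
    have bnd: "Bnd = (\<lambda>cp. ((\<Sum>Ss\<in>S1. \<mu> + t / 2 + (\<Sum>k\<in>Ss. Z Ss k cp) / (2 * t)) + (\<Sum>k\<in>U. \<Sum>f<F. W k f cp)) / real F)"
      by (simp add: Bnd_def Z_def W_def fun_eq_iff)
    have eA: "measure_pmf.expectation Jt (\<lambda>cp. \<Sum>Ss\<in>S1. \<mu> + t / 2 + (\<Sum>k\<in>Ss. Z Ss k cp) / (2 * t))
       = (\<Sum>Ss\<in>S1. \<mu> + t / 2 + (\<Sum>k\<in>Ss. measure_pmf.expectation Jt (Z Ss k)) / (2 * t))"
    proof -
      have "measure_pmf.expectation Jt (\<lambda>cp. \<Sum>Ss\<in>S1. \<mu> + t / 2 + (\<Sum>k\<in>Ss. Z Ss k cp) / (2 * t))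
          = (\<Sum>Ss\<in>S1. measure_pmf.expectation Jt (\<lambda>cp. \<mu> + t / 2 + (\<Sum>k\<in>Ss. Z Ss k cp) / (2 * t)))"
        by (rule Bochner_Integration.integral_sum) auto
      also have "\<dots> = (\<Sum>Ss\<in>S1. \<mu> + t / 2 + (\<Sum>k\<in>Ss. measure_pmf.expectation Jt (Z Ss k)) / (2 * t))"
      proof (rule sum.cong[OF refl])
        fix Ss
        have "measure_pmf.expectation Jt (\<lambda>cp. \<mu> + t / 2 + (\<Sum>k\<in>Ss. Z Ss k cp) / (2 * t))
            = measure_pmf.expectation Jt (\<lambda>cp. \<mu> + t / 2) + measure_pmf.expectation Jt (\<lambda>cp. (\<Sum>k\<in>Ss. Z Ss k cp) / (2 * t))"
          by (rule Bochner_Integration.integral_add) auto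
        also have "measure_pmf.expectation Jt (\<lambda>cp. \<mu> + t / 2) = \<mu> + t / 2" by simp
        also have "measure_pmf.expectation Jt (\<lambda>cp. (\<Sum>k\<in>Ss. Z Ss k cp) / (2 * t))
            = measure_pmf.expectation Jt (\<lambda>cp. \<Sum>k\<in>Ss. Z Ss k cp) / (2 * t)"
          by (rule integral_divide_zero)
        also have "measure_pmf.expectation Jt (\<lambda>cp. \<Sum>k\<in>Ss. Z Ss k cp) = (\<Sum>k\<in>Ss. measure_pmf.expectation Jt (Z Ss k))"
          by (rule Bochner_Integration.integral_sum) auto
        finally show "measure_pmf.expectation Jt (\<lambda>cp. \<mu> + t / 2 + (\<Sum>k\<in>Ss. Z Ss k cp) / (2 * t))
            = \<mu> + t / 2 + (\<Sum>k\<in>Ss. measure_pmf.expectation Jt (Z Ss k)) / (2 * t)" .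
      qed
      finally show ?thesis .
    qed
    have eB: "measure_pmf.expectation Jt (\<lambda>cp. \<Sum>k\<in>U. \<Sum>f<F. W k f cp)
       = (\<Sum>k\<in>U. \<Sum>f<F. measure_pmf.expectation plac (\<lambda>c. of_bool (k \<notin> A c k f \<and> card (A c k f) < g)))"
    proof -
      have "measure_pmf.expectation Jt (\<lambda>cp. \<Sum>k\<in>U. \<Sum>f<F. W k f cp)
          = (\<Sum>k\<in>U. measure_pmf.expectation Jt (\<lambda>cp. \<Sum>f<F. W k f cp))"
        by (rule Bochner_Integration.integral_sum) auto
      also have "\<dots> = (\<Sum>k\<in>U. \<Sum>f<F. measure_pmf.expectation Jt (W k f))"
        by (intro sum.cong[OF refl] Bochner_Integration.integral_sum) auto
      also have "\<dots> = (\<Sum>k\<in>U. \<Sum>f<F. measure_pmf.expectation plac (\<lambda>c. of_bool (k \<notin> A c k f \<and> card (A c k f) < g)))"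
      proof (intro sum.cong[OF refl])
        fix k f
        show "measure_pmf.expectation Jt (W k f) = measure_pmf.expectation plac (\<lambda>c. of_bool (k \<notin> A c k f \<and> card (A c k f) < g))"
          unfolding E_Jt by (simp add: W_def)
      qed
      finally show ?thesis .
    qed
    have "measure_pmf.expectation Jt Bnd =
       (measure_pmf.expectation Jt (\<lambda>cp. \<Sum>Ss\<in>S1. \<mu> + t / 2 + (\<Sum>k\<in>Ss. Z Ss k cp) / (2 * t))
        + measure_pmf.expectation Jt (\<lambda>cp. \<Sum>k\<in>U. \<Sum>f<F. W k f cp)) / real F"
      unfolding bnd by (subst integral_divide_zero) (rule arg_cong[where f = "\<lambda>x. x / real F"], rule Bochner_Integration.integral_add, auto)
    also have "\<dots> = ((\<Sum>Ss\<in>S1. \<mu> + t / 2 + (\<Sum>k\<in>Ss. measure_pmf.expectation Jt (Z Ss k)) / (2 * t))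
      + (\<Sum>k\<in>U. \<Sum>f<F. measure_pmf.expectation plac (\<lambda>c. of_bool (k \<notin> A c k f \<and> card (A c k f) < g)))) / real F"
      by (simp only: eA eB)
    finally have fin: "measure_pmf.expectation Jt Bnd = ((\<Sum>Ss\<in>S1. \<mu> + t / 2 + (\<Sum>k\<in>Ss. measure_pmf.expectation Jt (Z Ss k)) / (2 * t))
      + (\<Sum>k\<in>U. \<Sum>f<F. measure_pmf.expectation plac (\<lambda>c. of_bool (k \<notin> A c k f \<and> card (A c k f) < g)))) / real F" .
    have Zeta: "Z Ss k = (\<lambda>cp. (X k (Ss - {k}) cp - e k (Ss - {k}))\<^sup>2)" for Ss k
      by (rule ext) (simp add: Z_def)
    show ?thesis using fin by (simp only: Zeta)
  qed
  also have "\<dots> \<le> ((\<Sum>Ss\<in>S1. \<mu> + t / 2 + (real (g + 1) * \<mu>) / (2 * t)) + (\<Sum>k\<in>U. \<Sum>f<F. \<beta>)) / real F"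
  proof -
  have P1: "(\<Sum>Ss\<in>S1. \<mu> + t / 2 + (\<Sum>k\<in>Ss. measure_pmf.expectation Jt (\<lambda>cp. (X k (Ss - {k}) cp - e k (Ss - {k}))\<^sup>2)) / (2 * t))
     \<le> (\<Sum>Ss\<in>S1. \<mu> + t / 2 + (real (g + 1) * \<mu>) / (2 * t))"
  proof (rule sum_mono)
    fix Ss assume Ss: "Ss \<in> S1"
    have "(\<Sum>k\<in>Ss. measure_pmf.expectation Jt (\<lambda>cp. (X k (Ss - {k}) cp - e k (Ss - {k}))\<^sup>2))
        \<le> (\<Sum>k\<in>Ss. \<mu>)"
    proof (intro sum_mono)
      fix k assume k: "k \<in> Ss"
      have kU: "k \<in> U" using S1mem(1)[OF Ss] k by blast
      have ne: "Ss - {k} \<noteq> {}"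
      proof
        assume "Ss - {k} = {}"
        then have "card (Ss - {k}) = 0" by (simp only: card.empty)
        then show False using S1mem(4)[OF Ss k] g_ge by simp
      qed
      have "measure_pmf.expectation Jt (\<lambda>cp. (X k (Ss - {k}) cp - e k (Ss - {k}))\<^sup>2) \<le> e k (Ss - {k})"
        unfolding e_def by (rule second_moment[OF kU ne])
      also have "\<dots> \<le> \<mu>" by (rule e\<mu>[OF Ss k])
      finally show "measure_pmf.expectation Jt (\<lambda>cp. (X k (Ss - {k}) cp - e k (Ss - {k}))\<^sup>2) \<le> \<mu>" .
    qed
    also have "\<dots> = real (g + 1) * \<mu>" using S1mem(2)[OF Ss] by simp
    finally show "\<mu> + t / 2 + (\<Sum>k\<in>Ss. measure_pmf.expectation Jt (\<lambda>cp. (X k (Ss - {k}) cp - e k (Ss - {k}))\<^sup>2)) / (2 * t)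
        \<le> \<mu> + t / 2 + real (g + 1) * \<mu> / (2 * t)" using t0 by (simp add: divide_right_mono)
  qed
  have P2: "(\<Sum>k\<in>U. \<Sum>f<F. measure_pmf.expectation plac (\<lambda>c. of_bool (k \<notin> A c k f \<and> card (A c k f) < g)))
      \<le> (\<Sum>k\<in>U. \<Sum>f<F. \<beta>)"
    unfolding \<beta>_def by (intro sum_mono tail_A) auto
  show ?thesis by (rule divide_right_mono[OF add_mono[OF P1 P2]]) simp
  qed
  also have "\<dots> = (real (Kp choose (g + 1)) * (\<mu> + t / 2 + (real (g + 1) * \<mu>) / (2 * t)) + real Kp * real F * \<beta>) / real F"
    by (simp add: card_S1 card_U)
  also have "\<dots> \<le> 4 / 3 * real Kp / real (g + 1)"
  proof -
    have h1: "\<mu> + t / 2 + (real (g + 1) * \<mu>) / (2 * t) \<le> 11 / 10 * \<mu>"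
    proof -
      have mp: "0 < \<mu>" using t0 by (simp add: t_def)
      have t2: "(real (g + 1) * \<mu>) / (2 * t) = 5 * real (g + 1)" using mp by (simp add: t_def field_simps)
      show ?thesis unfolding t2 using \<mu>ge by (simp add: t_def)
    qed
    have h2: "real (Kp choose (g + 1)) * real (g + 1) = real Kp * B"
    proof -
      have "Suc (Kp - 1) * ((Kp - 1) choose g) = (Suc (Kp - 1) choose Suc g) * Suc g"
        by (rule Suc_times_binomial_eq)
      then have "Kp * ((Kp - 1) choose g) = (Kp choose (g + 1)) * (g + 1)" using Kp_pos by simp
      then show ?thesis unfolding B_def by (metis of_nat_mult)
    qed
    have h3: "real (g + 1) * \<beta> \<le> 1 / 5"
      unfolding \<beta>_def using beta_bound[OF g7 _ Kq] q_ge by simp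
    have Fp: "0 < real F" using F_pos by simp
    have q1: "0 \<le> 1 - 1 / real q" "1 - 1 / real q \<le> 1" using q_ge by auto
    have "real (Kp choose (g + 1)) * (\<mu> + t / 2 + (real (g + 1) * \<mu>) / (2 * t)) \<le> real (Kp choose (g + 1)) * (11 / 10 * \<mu>)"
      using h1 by (intro mult_left_mono) auto
    also have "real (Kp choose (g + 1)) * (11 / 10 * \<mu>) = 11 / 10 * real F * (1 - 1 / real q) * (real (Kp choose (g + 1)) / B)"
      by (simp add: \<mu>_def field_simps)
    also have "real (Kp choose (g + 1)) / B = real Kp / real (g + 1)"
      using h2 B0 by (simp add: field_simps)
    also have "11 / 10 * real F * (1 - 1 / real q) * (real Kp / real (g + 1)) \<le> 11 / 10 * real F * 1 * (real Kp / real (g + 1))"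
      using q1 Fp by (intro mult_right_mono mult_left_mono) auto
    finally have a1: "real (Kp choose (g + 1)) * (\<mu> + t / 2 + (real (g + 1) * \<mu>) / (2 * t)) \<le> 11 / 10 * real F * (real Kp / real (g + 1))"
      by simp
    have a2: "real Kp * real F * \<beta> \<le> real F * (real Kp / real (g + 1)) / 5"
    proof -
      have "\<beta> \<le> 1 / 5 / real (g + 1)" using h3 by (simp add: field_simps)
      then have "real Kp * real F * \<beta> \<le> real Kp * real F * (1 / 5 / real (g + 1))"
        by (intro mult_left_mono) auto
      then show ?thesis by (simp add: field_simps)
    qed
    have "(real (Kp choose (g + 1)) * (\<mu> + t / 2 + (real (g + 1) * \<mu>) / (2 * t)) + real Kp * real F * \<beta>) / real F
        \<le> (11 / 10 * real F * (real Kp / real (g + 1)) + real F * (real Kp / real (g + 1)) / 5) / real F"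
      using a1 a2 Fp by (intro divide_right_mono) auto
    also have "\<dots> = 13 / 10 * (real Kp / real (g + 1))"
    proof -
      have gen: "(11 / 10 * real F * z + real F * z / 5) / real F = 13 / 10 * z" for z :: real
        using Fp by (simp add: field_simps)
      show ?thesis by (rule gen)
    qed
    also have "\<dots> \<le> 4 / 3 * real Kp / real (g + 1)" by (simp add: field_simps)
    finally show ?thesis .
  qed
  finally show ?thesis .
qed

end

context gctx begin

lemma Jt_unfold: "Jt = bind_pmf (placement_pmf (m * Kp) N q F')
    (\<lambda>c. map_pmf (\<lambda>P. (c, P)) (pulldown_pmf (m * Kp) Kp q F' g d c))"
  by (simp add: Jt_def plac_def pd_def K_def)

lemma group_expect_ext:
  assumes "7 \<le> g" "F' = 100 * (g + 1) * ((Kp - 1) choose g)" "3 * real g * real q \<le> real Kp"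
  shows "measure_pmf.expectation (bind_pmf (placement_pmf (m * Kp) N q F')
    (\<lambda>c. map_pmf (\<lambda>P. (c, P)) (pulldown_pmf (m * Kp) Kp q F' g d c)))
     (\<lambda>cp. group_cost (m * Kp) q F' d (fst cp) (snd cp) {i * Kp ..< i * Kp + Kp})
         \<le> 4 / 3 * real Kp / real (g + 1)"
  using group_expect[OF assms] by (simp add: Jt_unfold K_def U_def)

lemma finite_Jt_ext: "finite (set_pmf (bind_pmf (placement_pmf (m * Kp) N q F')
    (\<lambda>c. map_pmf (\<lambda>P. (c, P)) (pulldown_pmf (m * Kp) Kp q F' g d c))))"
  using finite_Jt by (simp add: Jt_unfold)

end

lemma all_groups:
  fixes N m Kp q F' g :: nat and d :: "nat \<Rightarrow> nat"
  assumes Kp: "0 < Kp" and m: "1 \<le> m" and q: "2 \<le> q" and g7: "7 \<le> g" and gK: "g + 1 \<le> Kp"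
    and F'eq: "F' = 100 * (g + 1) * ((Kp - 1) choose g)" and Kq: "3 * real g * real q \<le> real Kp"
    and d: "\<forall>k < m * Kp. d k < N"
  shows "expected_cost N m Kp q F' g d \<le> 4 / 3 * real (m * Kp) / real (g + 1)"
proof -
  define J0 where "J0 = bind_pmf (placement_pmf (m * Kp) N q F')
    (\<lambda>c. map_pmf (\<lambda>P. (c, P)) (pulldown_pmf (m * Kp) Kp q F' g d c))"
  have F'pos: "0 < F'" using F'eq gK by simp
  have G: "gctx N m Kp i q F' g d" if "i < m" for i
    using Kp that q g7 gK F'pos d by unfold_locales auto
  have finJ: "finite (set_pmf J0)" unfolding J0_def by (rule gctx.finite_Jt_ext[OF G[of 0]]) (use m in auto)
  have cost: "cost_pmf N m Kp q F' g d = map_pmf (\<lambda>cp. total_cost m Kp q F' d (fst cp) (snd cp)) J0"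
    unfolding cost_pmf_def J0_def map_bind_pmf
    by (intro bind_pmf_cong refl) (simp add: map_pmf_def bind_assoc_pmf bind_return_pmf)
  have "expected_cost N m Kp q F' g d = measure_pmf.expectation J0 (\<lambda>cp. total_cost m Kp q F' d (fst cp) (snd cp))"
    by (simp add: expected_cost_def cost)
  also have "\<dots> = (\<Sum>i<m. measure_pmf.expectation J0 (\<lambda>cp. group_cost (m * Kp) q F' d (fst cp) (snd cp) {i * Kp ..< i * Kp + Kp}))"
    unfolding total_cost_def
    by (rule Bochner_Integration.integral_sum) (rule integrable_measure_pmf_finite[OF finJ])
  also have "\<dots> \<le> (\<Sum>i<m. 4 / 3 * real Kp / real (g + 1))"
    unfolding J0_def by (intro sum_mono gctx.group_expect_ext[OF G g7 F'eq Kq]) auto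
  also have "\<dots> = 4 / 3 * real (m * Kp) / real (g + 1)" by simp
  finally show ?thesis .
qed

lemma exp_half_bounds: "3/2 \<le> exp (1/2::real)" "exp (1/2::real) \<le> 2"
proof -
  show "3/2 \<le> exp (1/2::real)" using exp_ge_add_one_self[of "1/2::real"] by simp
  have "exp (1/2::real) ^ 2 = exp 1" by (subst exp_of_nat_mult[symmetric]) simp
  then have "exp (1/2::real) ^ 2 \<le> 2 ^ 2" using exp_le by simp
  then show "exp (1/2::real) \<le> 2" by (rule power2_le_imp_le) simp
qed

lemma exp1_gt2: "2 < exp (1::real)"
proof -
  have "exp (1/2::real) ^ 2 = exp 1" by (subst exp_of_nat_mult[symmetric]) simp
  moreover have "(3/2::real) ^ 2 \<le> exp (1/2) ^ 2" using exp_half_bounds(1) by (intro power_mono) auto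
  ultimately show ?thesis by (simp add: power2_eq_square)
qed

lemma ln2_ge: "1/2 \<le> ln (2::real)"
  using exp_half_bounds(2) by (subst ln_ge_iff) auto

lemma main_lemma:
  fixes N :: nat and M :: real and g :: nat
  assumes M: "0 < M" "M \<le> real N" and e: "exp 1 \<le> real (qq (real N) M)" and g7: "7 \<le> g"
    and gr: "real g \<le> (real N / M)^2 / (3 * ln (real N / M))"
  shows "\<exists>F' > 0.
        real (qq (real N) M * F') \<le>
          100 * real (Kgrp (real N) M g choose g) * (ln (real (Kgrp (real N) M g choose g)))^2
            * real (qq (real N) M) \<and>
        (\<forall>m \<ge> 1. \<forall>d :: nat \<Rightarrow> nat. (\<forall>k < m * Kgrp (real N) M g. d k < N) \<longrightarrow>
           expected_cost N m (Kgrp (real N) M g) (qq (real N) M) F' g d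
             \<le> 4 / 3 * real (m * Kgrp (real N) M g) / real (g + 1))"
proof -
  define r where "r = real N / M"
  define q where "q = qq (real N) M"
  define Kp where "Kp = Kgrp (real N) M g"
  have q_eq: "q = nat \<lceil>r\<rceil>" by (simp add: q_def qq_def r_def)
  have Kp_eq: "Kp = nat \<lceil>real q * 3 * real g * ln r\<rceil>" by (simp add: Kp_def Kgrp_def q_def r_def)
  have q3: "3 \<le> q"
  proof -
    have "2 < real q" using e exp1_gt2 by (simp add: q_def)
    then show ?thesis by simp
  qed
  have r2: "2 < r"
  proof (rule ccontr)
    assume "\<not> 2 < r"
    then have "\<lceil>r\<rceil> \<le> 2" by (simp add: ceiling_le_iff)
    then have "q \<le> 2" by (simp add: q_eq)
    then show False using q3 by simp
  qed
  have rpos: "0 < r" using r2 by simp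
  have lnpos: "0 < ln r" using r2 by simp
  have lnr: "1 \<le> ln r"
  proof (rule ccontr)
    assume "\<not> 1 \<le> ln r"
    then have "ln r < ln (exp 1)" by simp
    then have "r < exp 1" using rpos by (subst (asm) ln_less_cancel_iff) auto
    then have r3: "r < 3" using exp_le by simp
    have "r * r < 3 * 3" using rpos r3 by (intro mult_strict_mono) auto
    then have rsq: "r^2 < 9" by (simp add: power2_eq_square)
    have "ln (1 / r) \<le> 1 / r - 1" using rpos by (intro ln_le_minus_one) simp
    then have "1 - 1 / r \<le> ln r" using rpos by (simp add: ln_div)
    moreover have "1 / r < 1 / 2" using r2 by (simp add: field_simps)
    ultimately have lh: "1 / 2 < ln r" by simp
    have "7 * (3 * ln r) \<le> real g * (3 * ln r)" using g7 lnpos by (intro mult_right_mono) auto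
    also have "\<dots> \<le> r^2"
    proof -
      have gr': "real g \<le> r^2 / (3 * ln r)" using gr by (simp add: r_def)
      have "0 < 3 * ln r" using lnpos by simp
      then show ?thesis using gr' by (simp only: pos_le_divide_eq)
    qed
    finally have "21 * ln r \<le> r^2" by simp
    then show False using lh rsq by simp
  qed
  have Kq: "3 * real g * real q \<le> real Kp"
  proof -
    have "3 * real g * real q * 1 \<le> 3 * real g * real q * ln r"
      by (intro mult_left_mono lnr) simp
    then have "3 * real g * real q \<le> real q * 3 * real g * ln r" by (simp add: ac_simps)
    also have "\<dots> \<le> real Kp" unfolding Kp_eq by (rule real_nat_ceiling_ge)
    finally show ?thesis .
  qed
  have K2g: "2 * real g \<le> real Kp"
  proof -
    have "real g * 2 \<le> real g * (3 * real q)" by (intro mult_left_mono) (use q3 in auto)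
    then have "2 * real g \<le> 3 * real g * real q" by (simp add: ac_simps)
    then show ?thesis using Kq by simp
  qed
  have gK: "g + 1 \<le> Kp" using K2g g7 by linarith
  have Kp0: "0 < Kp" using gK by simp
  define F' where "F' = 100 * (g + 1) * ((Kp - 1) choose g)"
  have F'pos: "0 < F'" using gK by (simp add: F'_def)
  have bound: "real (q * F') \<le> 100 * real (Kp choose g) * (ln (real (Kp choose g)))^2 * real q"
  proof -
    have gle: "g \<le> Kp" using gK by simp
    have b1: "real ((Kp - 1) choose g) \<le> real (Kp choose g)" by (simp add: binomial_right_mono)
    have pow: "2 ^ g \<le> real (Kp choose g)"
    proof -
      have "2 \<le> real Kp / real g" using K2g g7 by (simp add: field_simps)
      then have "(2::real) ^ g \<le> (real Kp / real g) ^ g" by (intro power_mono) auto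
      also have "\<dots> \<le> real (Kp choose g)" by (rule binomial_ge_n_over_k_pow_k[OF gle])
      finally show ?thesis .
    qed
    have bpos: "0 < real (Kp choose g)" using gle by simp
    have lnb: "real g / 2 \<le> ln (real (Kp choose g))"
    proof -
      have "real g * (1 / 2) \<le> real g * ln 2" using ln2_ge by (intro mult_left_mono) auto
      then have "real g / 2 \<le> real g * ln 2" by simp
      also have "\<dots> = ln ((2::real) ^ g)" by (simp add: ln_realpow)
      also have "\<dots> \<le> ln (real (Kp choose g))" using pow gle by (subst ln_le_cancel_iff) auto
      finally show ?thesis .
    qed
    have g1: "real (g + 1) \<le> (ln (real (Kp choose g)))^2"
    proof -
      have "real (g + 1) \<le> (real g / 2)^2"
      proof -
        have "7 * g \<le> g * g" using g7 by (intro mult_le_mono1)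
        then have "g * 4 + 4 \<le> g * g" using g7 by linarith
        then have "real (g * 4 + 4) \<le> real (g * g)" by (simp only: of_nat_le_iff)
        then have "real g * 4 + 4 \<le> real g * real g" by simp
        then show ?thesis by (simp add: power2_eq_square field_simps)
      qed
      also have "\<dots> \<le> (ln (real (Kp choose g)))^2" using lnb g7 by (intro power_mono) auto
      finally show ?thesis .
    qed
    have "real (q * F') = real q * 100 * real (g + 1) * real ((Kp - 1) choose g)" by (simp add: F'_def)
    also have "\<dots> \<le> real q * 100 * (ln (real (Kp choose g)))^2 * real (Kp choose g)"
      using g1 b1 by (intro mult_mono mult_left_mono) auto
    also have "\<dots> = 100 * real (Kp choose g) * (ln (real (Kp choose g)))^2 * real q" by simp
    finally show ?thesis .
  qed
  have exp_bound: "expected_cost N m Kp q F' g d \<le> 4 / 3 * real (m * Kp) / real (g + 1)"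
    if "1 \<le> m" "\<forall>k < m * Kp. d k < N" for m d
    by (rule all_groups[OF Kp0 that(1) _ g7 gK F'_def Kq that(2)]) (use q3 in simp)
  show ?thesis unfolding q_def[symmetric] Kp_def[symmetric]
    using F'pos bound exp_bound by blast
qed

theorem theorem8:
  shows "\<exists>C > 0. \<forall>\<epsilon> > 0. \<exists>K0. \<forall>(N::nat) (M::real) (g::nat).
     0 < M \<and> M \<le> real N \<and> real (Kgrp (real N) M g) < real N \<and>
     exp 1 \<le> real (qq (real N) M) \<and>
     7 \<le> g \<and> real g \<le> (real N / M)^2 / (3 * ln (real N / M)) \<and>
     K0 \<le> Kgrp (real N) M g \<longrightarrow>
     (\<exists>F' > 0.
        real (qq (real N) M * F') \<le>
          C * real (Kgrp (real N) M g choose g) * (ln (real (Kgrp (real N) M g choose g)))^2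
            * real (qq (real N) M) \<and>
        (\<forall>m \<ge> 1. \<forall>d :: nat \<Rightarrow> nat. (\<forall>k < m * Kgrp (real N) M g. d k < N) \<longrightarrow>
           expected_cost N m (Kgrp (real N) M g) (qq (real N) M) F' g d
             \<le> 4 / 3 * real (m * Kgrp (real N) M g) / real (g + 1) * (1 + \<epsilon>)))"
proof (rule exI[of _ "100::real"], intro conjI allI impI)
  show "(0::real) < 100" by simp
next
  fix \<epsilon> :: real assume \<epsilon>: "0 < \<epsilon>"
  show "\<exists>K0. \<forall>(N::nat) (M::real) (g::nat).
     0 < M \<and> M \<le> real N \<and> real (Kgrp (real N) M g) < real N \<and>
     exp 1 \<le> real (qq (real N) M) \<and>
     7 \<le> g \<and> real g \<le> (real N / M)^2 / (3 * ln (real N / M)) \<and>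
     K0 \<le> Kgrp (real N) M g \<longrightarrow>
     (\<exists>F' > 0.
        real (qq (real N) M * F') \<le>
          100 * real (Kgrp (real N) M g choose g) * (ln (real (Kgrp (real N) M g choose g)))^2
            * real (qq (real N) M) \<and>
        (\<forall>m \<ge> 1. \<forall>d :: nat \<Rightarrow> nat. (\<forall>k < m * Kgrp (real N) M g. d k < N) \<longrightarrow>
           expected_cost N m (Kgrp (real N) M g) (qq (real N) M) F' g d
             \<le> 4 / 3 * real (m * Kgrp (real N) M g) / real (g + 1) * (1 + \<epsilon>)))"
  proof (rule exI[of _ 0], intro allI impI)
    fix N :: nat and M :: real and g :: nat
    assume H: "0 < M \<and> M \<le> real N \<and> real (Kgrp (real N) M g) < real N \<and>
     exp 1 \<le> real (qq (real N) M) \<and>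
     7 \<le> g \<and> real g \<le> (real N / M)^2 / (3 * ln (real N / M)) \<and>
     0 \<le> Kgrp (real N) M g"
    then have h1: "0 < M" "M \<le> real N" "exp 1 \<le> real (qq (real N) M)" "7 \<le> g"
      "real g \<le> (real N / M)^2 / (3 * ln (real N / M))" by auto
    obtain F' where F': "0 < F'"
      "real (qq (real N) M * F') \<le>
          100 * real (Kgrp (real N) M g choose g) * (ln (real (Kgrp (real N) M g choose g)))^2
            * real (qq (real N) M)"
      "\<forall>m \<ge> 1. \<forall>d :: nat \<Rightarrow> nat. (\<forall>k < m * Kgrp (real N) M g. d k < N) \<longrightarrow>
           expected_cost N m (Kgrp (real N) M g) (qq (real N) M) F' g d
             \<le> 4 / 3 * real (m * Kgrp (real N) M g) / real (g + 1)"
      using main_lemma[OF h1] by blast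
    have F'3: "\<forall>m \<ge> 1. \<forall>d :: nat \<Rightarrow> nat. (\<forall>k < m * Kgrp (real N) M g. d k < N) \<longrightarrow>
           expected_cost N m (Kgrp (real N) M g) (qq (real N) M) F' g d
             \<le> 4 / 3 * real (m * Kgrp (real N) M g) / real (g + 1) * (1 + \<epsilon>)"
    proof (intro allI impI)
      fix m :: nat and d :: "nat \<Rightarrow> nat"
      assume "1 \<le> m" "\<forall>k < m * Kgrp (real N) M g. d k < N"
      then have "expected_cost N m (Kgrp (real N) M g) (qq (real N) M) F' g d
             \<le> 4 / 3 * real (m * Kgrp (real N) M g) / real (g + 1)" using F'(3) by blast
      also have "\<dots> = 4 / 3 * real (m * Kgrp (real N) M g) / real (g + 1) * 1" by simp
      also have "\<dots> \<le> 4 / 3 * real (m * Kgrp (real N) M g) / real (g + 1) * (1 + \<epsilon>)"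
        using \<epsilon> by (intro mult_left_mono) auto
      finally show "expected_cost N m (Kgrp (real N) M g) (qq (real N) M) F' g d
             \<le> 4 / 3 * real (m * Kgrp (real N) M g) / real (g + 1) * (1 + \<epsilon>)" .
    qed
    show "\<exists>F' > 0.
        real (qq (real N) M * F') \<le>
          100 * real (Kgrp (real N) M g choose g) * (ln (real (Kgrp (real N) M g choose g)))^2
            * real (qq (real N) M) \<and>
        (\<forall>m \<ge> 1. \<forall>d :: nat \<Rightarrow> nat. (\<forall>k < m * Kgrp (real N) M g. d k < N) \<longrightarrow>
           expected_cost N m (Kgrp (real N) M g) (qq (real N) M) F' g d
             \<le> 4 / 3 * real (m * Kgrp (real N) M g) / real (g + 1) * (1 + \<epsilon>))"
      using F'(1,2) F'3 by blast
  qed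
qed

end
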